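(* Let $n\ge2$, $0<m\le L$, $\kappa=L/m$, let $\rho\in(0,1)$ satisfy $1/(1-\rho)\ge(\sqrt\kappa+1)/2$, and set $T_s=1/(1-\rho)$ and $c=\dfrac{\kappa-(1+\rho)/(1-\rho)}{\rho\,(\kappa+(1+\rho)/(1-\rho))}\in[-1,1]$. Consider the two-step momentum algorithm with parameters $\alpha=(1+\rho)(1+c\rho)/L$, $\beta=c\rho^2$, $\gamma=0$. Then $$J_{\max}T_s=\sigma_w^2\,p_{1c}(\rho)\,n\kappa(\kappa+1),\qquad J_{\min}T_s=\sigma_w^2\,\kappa\big(2p_{1c}(\rho)(\kappa+1)+(n-2)p_{2c}(\rho)\big).$$ Furthermore, for the gradient noise model ($\sigma_w=\alpha\sigma$), $$J_{\max}T_s=\sigma^2\,p_{3c}(\rho)\,n\kappa(\kappa+1),\qquad J_{\min}T_s=\sigma^2\,\kappa\big(2p_{3c}(\rho)(\kappa+1)+(n-2)p_{4c}(\rho)\big),$$ where $q_c(\rho)=(1-c\rho)/(1-c\rho^2)$, $p_{1c}(\rho)=q_c(\rho)/(2(1+\rho)^2(1+c\rho)^2)$, $p_{2c}(\rho)=q_c(\rho)/((1+\rho)(1+c\rho^2)(1+c\rho))$, $p_{3c}(\rho)=q_c(\rho)/(2L^2)$, $p_{4c}(\rho)=q_c(\rho)q_{-c}(\rho)(1+\rho)/L^2$. In addition, if $c\in[0,1]$ then $p_{1c}(\rho)\in[1/64,1/2]$ and $p_{2c}(\rho)\in[1/16,1]$; and for $c\in[-1,1]$, $p_{3c}(\rho)\in[1/(4L^2),1/L^2]$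 and $p_{4c}(\rho)\in[1/(4L^2),4/L^2]$.
   Context: $\mathcal{Q}_m^L$ is the class of quadratic functions $f(x)=\tfrac12x^TQx-q^Tx$ on $\mathbb{R}^n$ with $q\in\mathbb{R}^n$, $Q=Q^T\succ0$ whose largest eigenvalue is $L$ and smallest is $m$; $x^\star$ is the minimizer. The noisy two-step momentum algorithm with constant parameters $(\alpha,\beta,\gamma)$ is $x^{t+2}=x^{t+1}+\beta(x^{t+1}-x^t)-\alpha\nabla f\big(x^{t+1}+\gamma(x^{t+1}-x^t)\big)+\sigma_w w^t$, where $w^t$ is white noise with $\mathbb{E}[w^t]=0$, $\mathbb{E}[w^t(w^\tau)^T]=I\,\delta(t-\tau)$. In the iterate noise model $\sigma_w=\sigma$, in the gradient noise model $\sigma_w=\alpha\sigma$, with $\sigma>0$. Noise amplification $J=\lim_{t\to\infty}\frac1t\sum_{k=0}^t\mathbb{E}\|x^k-x^\star\|_2^2$ (depends on $f$); $J_{\max}=\max_{f\in\mathcal{Q}_m^L}J$, $J_{\min}=\min_{f\in\mathcal{Q}_m^L}J$. *)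

theory Defs
  imports "HOL-Probability.Probability"
begin

definition mat_eigenvalue :: "real^'n^'n \<Rightarrow> real \<Rightarrow> bool" where
  "mat_eigenvalue Q lam \<longleftrightarrow> (\<exists>v. v \<noteq> 0 \<and> Q *v v = lam *s v)"

definition in_QmL :: "real \<Rightarrow> real \<Rightarrow> real^'n^'n \<Rightarrow> bool" where
  "in_QmL m L Q \<longleftrightarrow> transpose Q = Q \<and> (\<forall>x. x \<noteq> 0 \<longrightarrow> x \<bullet> (Q *v x) > 0)
     \<and> mat_eigenvalue Q L \<and> (\<forall>mu. mat_eigenvalue Q mu \<longrightarrow> mu \<le> L)
     \<and> mat_eigenvalue Q m \<and> (\<forall>mu. mat_eigenvalue Q mu \<longrightarrow> m \<le> mu)"

definition quad_fun :: "real^'n^'n \<Rightarrow> real^'n \<Rightarrow> real^'n \<Rightarrow> real" where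
  "quad_fun Q q x = (1/2) * (x \<bullet> (Q *v x)) - q \<bullet> x"

text \<open>Gradient of quad_fun for symmetric Q.\<close>
definition quad_grad :: "real^'n^'n \<Rightarrow> real^'n \<Rightarrow> real^'n \<Rightarrow> real^'n" where
  "quad_grad Q q x = Q *v x - q"

definition quad_minimizer :: "real^'n^'n \<Rightarrow> real^'n \<Rightarrow> real^'n" where
  "quad_minimizer Q q = (THE x. \<forall>y. quad_fun Q q x \<le> quad_fun Q q y)"

fun tm_iter :: "real \<Rightarrow> real \<Rightarrow> real \<Rightarrow> real \<Rightarrow> real^'n^'n \<Rightarrow> real^'n \<Rightarrow>
     (nat \<Rightarrow> real^'n) \<Rightarrow> real^'n \<Rightarrow> real^'n \<Rightarrow> nat \<Rightarrow> real^'n" where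
  "tm_iter \<alpha> \<beta> \<gamma> \<sigma>w Q q ws x0 x1 0 = x0"
| "tm_iter \<alpha> \<beta> \<gamma> \<sigma>w Q q ws x0 x1 (Suc 0) = x1"
| "tm_iter \<alpha> \<beta> \<gamma> \<sigma>w Q q ws x0 x1 (Suc (Suc t)) =
     (let u = tm_iter \<alpha> \<beta> \<gamma> \<sigma>w Q q ws x0 x1 t;
          v = tm_iter \<alpha> \<beta> \<gamma> \<sigma>w Q q ws x0 x1 (Suc t)
      in v + \<beta> *\<^sub>R (v - u) - \<alpha> *\<^sub>R quad_grad Q q (v + \<gamma> *\<^sub>R (v - u)) + \<sigma>w *\<^sub>R ws t)"

definition white_noise :: "'w measure \<Rightarrow> (nat \<Rightarrow> 'w \<Rightarrow> real^'n) \<Rightarrow> bool" where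
  "white_noise M w \<longleftrightarrow>
     (\<forall>t i. (\<lambda>\<omega>. w t \<omega> $ i) \<in> borel_measurable M \<and> integrable M (\<lambda>\<omega>. (w t \<omega> $ i)^2)
            \<and> (\<integral>\<omega>. w t \<omega> $ i \<partial>M) = 0)
   \<and> (\<forall>t \<tau> i j. (\<integral>\<omega>. w t \<omega> $ i * w \<tau> \<omega> $ j \<partial>M) = (if t = \<tau> \<and> i = j then 1 else 0))"

definition avg_err :: "'w measure \<Rightarrow> (nat \<Rightarrow> 'w \<Rightarrow> real^'n) \<Rightarrow> real \<Rightarrow> real \<Rightarrow> real \<Rightarrow> real \<Rightarrow>
     real^'n^'n \<Rightarrow> real^'n \<Rightarrow> real^'n \<Rightarrow> real^'n \<Rightarrow> nat \<Rightarrow> real" where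
  "avg_err M w \<alpha> \<beta> \<gamma> \<sigma>w Q q x0 x1 t =
     (1 / real t) * (\<Sum>k\<le>t. \<integral>\<omega>. (norm (tm_iter \<alpha> \<beta> \<gamma> \<sigma>w Q q (\<lambda>s. w s \<omega>) x0 x1 k
                                         - quad_minimizer Q q))^2 \<partial>M)"

definition noise_amp :: "'w measure \<Rightarrow> (nat \<Rightarrow> 'w \<Rightarrow> real^'n) \<Rightarrow> real \<Rightarrow> real \<Rightarrow> real \<Rightarrow> real \<Rightarrow>
     real^'n^'n \<Rightarrow> real^'n \<Rightarrow> real^'n \<Rightarrow> real^'n \<Rightarrow> real" where
  "noise_amp M w \<alpha> \<beta> \<gamma> \<sigma>w Q q x0 x1 = lim (avg_err M w \<alpha> \<beta> \<gamma> \<sigma>w Q q x0 x1)"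

definition noise_amp_exists :: "'w measure \<Rightarrow> (nat \<Rightarrow> 'w \<Rightarrow> real^'n) \<Rightarrow> real \<Rightarrow> real \<Rightarrow> real \<Rightarrow> real \<Rightarrow>
     real \<Rightarrow> real \<Rightarrow> real^'n \<Rightarrow> real^'n \<Rightarrow> bool" where
  "noise_amp_exists M w \<alpha> \<beta> \<gamma> \<sigma>w m L x0 x1 \<longleftrightarrow>
     (\<forall>Q q. in_QmL m L Q \<longrightarrow> convergent (avg_err M w \<alpha> \<beta> \<gamma> \<sigma>w Q q x0 x1))"

definition noise_amp_set :: "'w measure \<Rightarrow> (nat \<Rightarrow> 'w \<Rightarrow> real^'n) \<Rightarrow> real \<Rightarrow> real \<Rightarrow> real \<Rightarrow> real \<Rightarrow>
     real \<Rightarrow> real \<Rightarrow> real^'n \<Rightarrow> real^'n \<Rightarrow> real set" where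
  "noise_amp_set M w \<alpha> \<beta> \<gamma> \<sigma>w m L x0 x1 =
     {noise_amp M w \<alpha> \<beta> \<gamma> \<sigma>w Q q x0 x1 | Q q. in_QmL m L Q}"

definition is_max_of :: "real set \<Rightarrow> real \<Rightarrow> bool" where
  "is_max_of S v \<longleftrightarrow> v \<in> S \<and> (\<forall>u\<in>S. u \<le> v)"

definition is_min_of :: "real set \<Rightarrow> real \<Rightarrow> bool" where
  "is_min_of S v \<longleftrightarrow> v \<in> S \<and> (\<forall>u\<in>S. v \<le> u)"

end

theory Submission
  imports Defs
begin

lemma alg_basic:
  fixes m L \<rho> \<kappa> c :: real
  assumes mpos: "0 < m" and mL: "m \<le> L" and rho: "0 < \<rho>" "\<rho> < 1"
    and rho_cond: "1 / (1 - \<rho>) \<ge> (sqrt \<kappa> + 1) / 2"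
    and kappa_def: "\<kappa> = L / m"
    and c_def: "c = (\<kappa> - (1 + \<rho>) / (1 - \<rho>)) / (\<rho> * (\<kappa> + (1 + \<rho>) / (1 - \<rho>)))"
  shows "1 \<le> \<kappa>" "\<kappa> \<le> ((1 + \<rho>) / (1 - \<rho>))^2" "c * \<rho> = (\<kappa> - (1 + \<rho>) / (1 - \<rho>)) / (\<kappa> + (1 + \<rho>) / (1 - \<rho>))"
    "-1 \<le> c" "c \<le> 1"
proof -
  define A where "A = (1 + \<rho>) / (1 - \<rho>)"
  have A1: "A > 1" using rho by (simp add: A_def field_simps)
  show k1: "1 \<le> \<kappa>" using mpos mL kappa_def by simp
  have "sqrt \<kappa> \<le> A" using rho_cond rho unfolding A_def by (simp add: field_simps)
  then have "(sqrt \<kappa>)^2 \<le> A^2" using k1 by (intro power_mono) auto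
  then show kA: "\<kappa> \<le> ((1 + \<rho>) / (1 - \<rho>))^2" using k1 by (simp add: A_def)
  have kA': "\<kappa> \<le> A^2" using kA by (simp add: A_def)
  show cr: "c * \<rho> = (\<kappa> - (1 + \<rho>) / (1 - \<rho>)) / (\<kappa> + (1 + \<rho>) / (1 - \<rho>))"
    using rho by (simp add: c_def)
  have pos: "\<kappa> + A > 0" using k1 A1 by simp
  have "c = (\<kappa> - A) / (\<rho> * (\<kappa> + A))" by (simp add: c_def A_def)
  have "A - \<kappa> \<le> \<rho> * (\<kappa> + A)"
  proof -
    have "A * (1 - \<rho>) = 1 + \<rho>" using rho by (simp add: A_def)
    then have "A - \<rho> * A = 1 + \<rho>" by (simp add: algebra_simps)
    moreover have "1 + \<rho> \<le> \<kappa> + \<rho> * \<kappa>" using k1 rho by (simp add: mult_left_mono add_mono)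
    ultimately show ?thesis by (simp add: algebra_simps)
  qed
  moreover have d: "\<rho> * (\<kappa> + A) > 0" using pos rho by simp
  ultimately show "-1 \<le> c" unfolding c_def A_def[symmetric] by (simp add: pos_le_divide_eq)
  have "\<kappa> - A \<le> \<rho> * (\<kappa> + A)"
  proof -
    have "\<kappa> * (1 - \<rho>) \<le> A^2 * (1 - \<rho>)" using kA' rho by (simp add: mult_right_mono)
    also have "A^2 * (1-\<rho>) = A * (1 + \<rho>)" using rho by (simp add: A_def power2_eq_square)
    finally show ?thesis by (simp add: algebra_simps)
  qed
  then show "c \<le> 1" using d unfolding c_def A_def[symmetric] by (simp add: pos_divide_le_eq)
qed

definition lyP :: "real \<Rightarrow> real \<Rightarrow> real" where
  "lyP a b = (1-b)/((1+b)*((1-b)^2-a^2))"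
definition lyV :: "real \<Rightarrow> real \<Rightarrow> real \<Rightarrow> real \<Rightarrow> real" where
  "lyV a b x z = lyP a b * x^2 + 2*(lyP a b * a * b/(1-b))*x*z + (1 + lyP a b * b^2)*z^2"

lemma ly_step:
  assumes "\<bar>b\<bar> < 1" "\<bar>a\<bar> < 1 - b"
  shows "lyV a b (a*x+b*z) x = lyV a b x z - z^2"
proof -
  have h1: "1 + b \<noteq> 0" "1 - b \<noteq> 0" using assms by auto
  have "a^2 < (1-b)^2" using assms by (simp add: abs_less_iff power2_eq_square) (smt (verit) mult_strict_mono' mult_minus_left mult_minus_right)
  then have h2: "(1-b)^2 - a^2 \<noteq> 0" by simp
  define P where "P = lyP a b"
  have hP: "P * ((1+b)*((1-b)^2-a^2)) = 1 - b" unfolding P_def lyP_def using h1 h2 by simp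
  have "(1-b) * lyV a b (a*x+b*z) x = (1-b) * (lyV a b x z - z^2)"
    unfolding lyV_def P_def[symmetric] using h1 hP by (simp add: field_simps) algebra
  then show ?thesis using h1 by simp
qed

lemma ly_nonneg:
  assumes "\<bar>b\<bar> < 1" "\<bar>a\<bar> < 1 - b"
  shows "lyV a b x z \<ge> 0" "lyP a b > 0"
proof -
  have a2: "a^2 < (1-b)^2" using assms
    by (metis abs_ge_zero abs_le_square_iff abs_of_pos add.commute diff_gt_0_iff_gt linorder_not_le order_le_less_trans power2_abs) 
  have b1: "1 + b > 0" "1 - b > 0" using assms by auto
  show P: "lyP a b > 0" unfolding lyP_def using a2 b1 by simp
  define P where "P = lyP a b"
  define R where "R = P * a * b / (1-b)"
  define S where "S = 1 + P * b^2"
  have "a^2/(1-b)^2 \<le> 1" using a2 b1 by simp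
  then have "P*S - R^2 = P + P^2*b^2*(1 - a^2/(1-b)^2)" unfolding R_def S_def using b1
    by (simp add: field_simps power2_eq_square)
  also have "\<dots> \<ge> 0" using P P_def \<open>a^2/(1-b)^2 \<le> 1\<close> by (intro add_nonneg_nonneg mult_nonneg_nonneg) auto
  finally have d: "P*S - R^2 \<ge> 0" .
  have "P * lyV a b x z = (P*x + R*z)^2 + (P*S - R^2)*z^2"
    unfolding lyV_def P_def[symmetric] R_def[symmetric] S_def[symmetric]
    by (simp add: algebra_simps power2_eq_square)
  also have "\<dots> \<ge> 0" using d by simp
  finally show "lyV a b x z \<ge> 0" using P P_def by (simp add: zero_le_mult_iff)
qed

lemma ly_sums:
  fixes y :: "nat \<Rightarrow> real"
  assumes "\<bar>b\<bar> < 1" "\<bar>a\<bar> < 1 - b"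
    and rec: "\<And>k. y (Suc (Suc k)) = a * y (Suc k) + b * y k"
  shows "(\<lambda>k. y k ^ 2) sums lyV a b (y 1) (y 0)"
proof -
  have tel: "(\<Sum>k<N. y k ^ 2) = lyV a b (y 1) (y 0) - lyV a b (y (Suc N)) (y N)" for N
  proof (induction N)
    case 0 then show ?case by simp
  next
    case (Suc N)
    have "lyV a b (y (Suc (Suc N))) (y (Suc N)) = lyV a b (y (Suc N)) (y N) - (y N)^2"
      using ly_step[OF assms(1,2)] rec by simp
    then show ?case using Suc by simp
  qed
  have bnd: "(\<Sum>k<N. y k ^ 2) \<le> lyV a b (y 1) (y 0)" for N
    using tel[of N] ly_nonneg(1)[OF assms(1,2), of "y (Suc N)" "y N"] by linarith
  have summ: "summable (\<lambda>k. y k ^ 2)"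
    by (rule summableI_nonneg_bounded[where x="lyV a b (y 1) (y 0)"]) (use bnd in auto)
  then have "(\<lambda>k. y k ^ 2) \<longlonglongrightarrow> 0" by (rule summable_LIMSEQ_zero)
  then have "(\<lambda>k. sqrt (y k ^ 2)) \<longlonglongrightarrow> sqrt 0" by (intro tendsto_intros)
  then have "(\<lambda>k. \<bar>y k\<bar>) \<longlonglongrightarrow> 0" by simp
  then have y0: "y \<longlonglongrightarrow> 0" by (simp add: tendsto_rabs_zero_iff)
  then have y1: "(\<lambda>k. y (Suc k)) \<longlonglongrightarrow> 0" by (rule LIMSEQ_Suc)
  have "(\<lambda>N. lyV a b (y (Suc N)) (y N)) \<longlonglongrightarrow> lyV a b 0 0"
    unfolding lyV_def by (intro tendsto_intros y0 y1)
  then have "(\<lambda>N. lyV a b (y 1) (y 0) - lyV a b (y (Suc N)) (y N)) \<longlonglongrightarrow> lyV a b (y 1) (y 0) - 0"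
    by (intro tendsto_intros) (simp add: lyV_def)
  then show ?thesis unfolding sums_def tel by simp
qed

fun hom :: "real \<Rightarrow> real \<Rightarrow> real \<Rightarrow> real \<Rightarrow> nat \<Rightarrow> real" where
  "hom a b x0 x1 0 = x0"
| "hom a b x0 x1 (Suc 0) = x1"
| "hom a b x0 x1 (Suc (Suc k)) = a * hom a b x0 x1 (Suc k) + b * hom a b x0 x1 k"

lemma rec_decomp:
  fixes y g :: "nat \<Rightarrow> real"
  assumes rec: "\<And>k. y (Suc (Suc k)) = a * y (Suc k) + b * y k + g k"
  shows "y k = hom a b (y 0) (y 1) k + (\<Sum>s<k. hom a b 0 1 (k - 1 - s) * g s)"
proof -
  let ?H = "hom a b 0 1"
  let ?D = "hom a b (y 0) (y 1)"
  have "y k = ?D k + (\<Sum>s<k. ?H (k - 1 - s) * g s) \<and>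
        y (Suc k) = ?D (Suc k) + (\<Sum>s<Suc k. ?H (Suc k - 1 - s) * g s)"
  proof (induction k)
    case 0 then show ?case by simp
  next
    case (Suc k)
    have IH1: "y k = ?D k + (\<Sum>s<k. ?H (k - 1 - s) * g s)" using Suc by blast
    have IH2: "y (Suc k) = ?D (Suc k) + (\<Sum>s<Suc k. ?H (k - s) * g s)" using Suc by simp
    have e1: "(\<Sum>s<Suc k. ?H (k - s) * g s) = (\<Sum>s<k. ?H (k - s) * g s)"
      by (simp add: sum.lessThan_Suc)
    have e2: "(\<Sum>s<Suc (Suc k). ?H (Suc k - s) * g s) = g k + (\<Sum>s<k. ?H (Suc k - s) * g s)"
      by (simp add: sum.lessThan_Suc)
    have e3: "(\<Sum>s<k. ?H (Suc k - s) * g s) = a * (\<Sum>s<k. ?H (k - s) * g s) + b * (\<Sum>s<k. ?H (k - 1 - s) * g s)"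
    proof -
      have "(\<Sum>s<k. ?H (Suc k - s) * g s) = (\<Sum>s<k. a * (?H (k - s) * g s) + b * (?H (k - 1 - s) * g s))"
      proof (rule sum.cong)
        fix s assume "s \<in> {..<k}"
        then have "Suc k - s = Suc (Suc (k - 1 - s))" "k - s = Suc (k - 1 - s)" by auto
        then show "?H (Suc k - s) * g s = a * (?H (k - s) * g s) + b * (?H (k - 1 - s) * g s)"
          by (simp add: algebra_simps)
      qed simp
      then show ?thesis by (simp add: sum.distrib sum_distrib_left)
    qed
    have "y (Suc (Suc k)) = a * y (Suc k) + b * y k + g k" by (rule rec)
    also have "\<dots> = ?D (Suc (Suc k)) + (\<Sum>s<Suc (Suc k). ?H (Suc k - s) * g s)"
      unfolding IH2 IH1 e1 e2 e3 by (simp add: algebra_simps)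
    finally show ?case using IH2 by simp
  qed
  then show ?thesis by blast
qed

lemma sym_inner:
  fixes Q :: "real^'n^'n"
  assumes "transpose Q = Q"
  shows "x \<bullet> (Q *v y) = (Q *v x) \<bullet> y"
proof -
  have "x \<bullet> (Q *v y) = (x v* Q) \<bullet> y" by (simp add: dot_lmul_matrix)
  also have "x v* Q = Q *v x" by (metis assms vector_transpose_matrix)
  finally show ?thesis .
qed

lemma eig_exists:
  fixes Q :: "real^'n^'n" and S :: "(real^'n) set"
  assumes sym: "transpose Q = Q" and S: "subspace S" and x0: "x0 \<in> S" "x0 \<noteq> 0"
    and inv: "\<And>x. x \<in> S \<Longrightarrow> Q *v x \<in> S"
  shows "\<exists>u\<in>S. norm u = 1 \<and> Q *v u = (u \<bullet> (Q *v u)) *\<^sub>R u"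
proof -
  define K where "K = sphere (0::real^'n) 1 \<inter> S"
  have cK: "compact K" unfolding K_def using closed_subspace[OF S] by (intro compact_Int_closed) auto
  have neK: "x0 /\<^sub>R norm x0 \<in> K" unfolding K_def using x0 S by (auto simp: subspace_scale)
  have cont: "continuous_on K (\<lambda>x. x \<bullet> (Q *v x))"
    by (intro continuous_intros linear_continuous_on bounded_linear_compose[OF matrix_vector_mul_bounded_linear]) auto
  obtain u where uK: "u \<in> K" and umax: "\<And>y. y \<in> K \<Longrightarrow> y \<bullet> (Q *v y) \<le> u \<bullet> (Q *v u)"
    using continuous_attains_sup[OF cK _ cont] neK by blast
  define \<mu> where "\<mu> = u \<bullet> (Q *v u)"
  have uS: "u \<in> S" and nu: "norm u = 1" using uK by (auto simp: K_def)
  have uu: "u \<bullet> u = 1" using nu by (simp add: norm_eq_1)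
  have gen: "y \<bullet> (Q *v y) \<le> \<mu> * (y \<bullet> y)" if yS: "y \<in> S" for y
  proof (cases "y = 0")
    case True then show ?thesis by simp
  next
    case False
    have "y /\<^sub>R norm y \<in> K" unfolding K_def using yS False S by (auto simp: subspace_scale)
    then have "(y /\<^sub>R norm y) \<bullet> (Q *v (y /\<^sub>R norm y)) \<le> \<mu>" using umax \<mu>_def by blast
    then have "(y \<bullet> (Q *v y)) / (norm y)^2 \<le> \<mu>"
      by (simp add: matrix_vector_mult_scaleR power2_eq_square divide_inverse mult_ac)
    then show ?thesis using False by (simp add: divide_le_eq power2_norm_eq_inner)
  qed
  define v where "v = Q *v u - \<mu> *\<^sub>R u"
  have vS: "v \<in> S" unfolding v_def using uS inv S by (simp add: subspace_diff subspace_scale)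
  have uv: "u \<bullet> v = 0" unfolding v_def using uu by (simp add: inner_diff_right \<mu>_def)
  have uQv: "u \<bullet> (Q *v v) = v \<bullet> v"
  proof -
    have "u \<bullet> (Q *v v) = (Q *v u) \<bullet> v" by (rule sym_inner[OF sym])
    also have "Q *v u = v + \<mu> *\<^sub>R u" by (simp add: v_def)
    finally show ?thesis using uv by (simp add: inner_add_left inner_add_right inner_commute)
  qed
  have vQu: "v \<bullet> (Q *v u) = v \<bullet> v"
    using uQv sym_inner[OF sym, of v u] by (simp add: inner_commute)
  have ineq: "2 * t * (v \<bullet> v) + t^2 * (v \<bullet> (Q *v v)) \<le> \<mu> * t^2 * (v \<bullet> v)" for t :: real
  proof -
    have yS: "u + t *\<^sub>R v \<in> S" using uS vS S by (simp add: subspace_add subspace_scale)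
    have "(u + t *\<^sub>R v) \<bullet> (Q *v (u + t *\<^sub>R v)) = \<mu> + 2 * t * (v \<bullet> v) + t^2 * (v \<bullet> (Q *v v))"
      using uQv vQu by (simp add: algebra_simps inner_add_left inner_add_right \<mu>_def power2_eq_square)
    moreover have "(u + t *\<^sub>R v) \<bullet> (u + t *\<^sub>R v) = 1 + t^2 * (v \<bullet> v)"
      using uu uv by (simp add: algebra_simps inner_add_left inner_add_right inner_commute power2_eq_square)
    ultimately show ?thesis using gen[OF yS] by (simp add: algebra_simps)
  qed
  have "v = 0"
  proof (rule ccontr)
    assume "v \<noteq> 0"
    then have vv: "v \<bullet> v > 0" by simp
    define K0 where "K0 = \<bar>\<mu> * (v \<bullet> v) - v \<bullet> (Q *v v)\<bar> + 1"
    have K0: "K0 \<ge> 1" unfolding K0_def by simp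
    define t where "t = (v \<bullet> v) / K0"
    have t: "t > 0" unfolding t_def using vv K0 by simp
    have "2 * t * (v \<bullet> v) \<le> t^2 * (\<mu> * (v \<bullet> v) - v \<bullet> (Q *v v))"
      using ineq[of t] by (simp add: algebra_simps)
    then have "2 * (v \<bullet> v) \<le> t * (\<mu> * (v \<bullet> v) - v \<bullet> (Q *v v))"
      using t by (simp add: power2_eq_square mult.assoc)
    also have "\<dots> \<le> t * (K0 - 1)" using t unfolding K0_def by (intro mult_left_mono) auto
    also have "\<dots> = (v \<bullet> v) * (K0 - 1) / K0" unfolding t_def by simp
    also have "\<dots> \<le> (v \<bullet> v)" using K0 vv by (simp add: divide_le_eq)
    finally show False using vv by simp
  qed
  then show ?thesis using uS nu unfolding v_def \<mu>_def by auto
qed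

definition good_eig :: "real^'n^'n \<Rightarrow> (real^'n) set \<Rightarrow> bool" where
  "good_eig Q B \<longleftrightarrow> pairwise orthogonal B \<and> (\<forall>u\<in>B. norm u = 1) \<and> (\<forall>u\<in>B. Q *v u = (u \<bullet> (Q *v u)) *\<^sub>R u)"

lemma good_indep: "good_eig Q B \<Longrightarrow> independent B"
  unfolding good_eig_def by (metis norm_zero pairwise_orthogonal_independent zero_neq_one)

lemma spectral_ex:
  fixes Q :: "real^'n^'n"
  assumes sym: "transpose Q = Q"
  shows "\<exists>B. good_eig Q B \<and> finite B \<and> card B = CARD('n) \<and> span B = UNIV"
proof -
  have "\<exists>B. good_eig Q B \<and> finite B \<and> card B = k" if "k \<le> CARD('n)" for k
    using that
  proof (induction k)
    case 0 then show ?case by (intro exI[of _ "{}"]) (auto simp: good_eig_def)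
  next
    case (Suc k)
    then obtain B where gB: "good_eig Q B" and fB: "finite B" and cB: "card B = k" by auto
    have ind: "independent B" using gB by (rule good_indep)
    have "span B \<noteq> UNIV"
    proof
      assume "span B = UNIV"
      then have "dim (UNIV :: (real^'n) set) \<le> card B" using fB by (intro dim_le_card) auto
      then show False using cB Suc.prems by simp
    qed
    then have "span B \<subset> span UNIV" by auto
    then obtain x where x: "x \<noteq> 0" "\<And>y. y \<in> span B \<Longrightarrow> orthogonal x y"
      by (rule orthogonal_to_subspace_exists_gen) blast
    define S where "S = {y. \<forall>u\<in>B. orthogonal u y}"
    have sS: "subspace S" unfolding S_def by (rule subspace_orthogonal_to_vectors)
    have xS: "x \<in> S" unfolding S_def using x(2) span_base by (auto simp: orthogonal_commute span_base)
    have invS: "Q *v y \<in> S" if "y \<in> S" for y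
    proof -
      have "orthogonal u (Q *v y)" if u: "u \<in> B" for u
      proof -
        have "u \<bullet> (Q *v y) = (Q *v u) \<bullet> y" by (rule sym_inner[OF sym])
        also have "\<dots> = (u \<bullet> (Q *v u)) * (u \<bullet> y)"
        proof -
          have e: "Q *v u = (u \<bullet> (Q *v u)) *\<^sub>R u" using gB u unfolding good_eig_def by blast
          show ?thesis by (subst e) (simp only: inner_scaleR_left)
        qed
        also have "u \<bullet> y = 0" using \<open>y \<in> S\<close> u unfolding S_def orthogonal_def by auto
        finally show ?thesis by (simp add: orthogonal_def)
      qed
      then show ?thesis unfolding S_def by auto
    qed
    obtain v where vS: "v \<in> S" and nv: "norm v = 1" and ev: "Q *v v = (v \<bullet> (Q *v v)) *\<^sub>R v"
      using eig_exists[OF sym sS xS x(1) invS] by blast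
    have vB: "v \<notin> B"
    proof
      assume "v \<in> B"
      then have "orthogonal v v" using vS unfolding S_def by auto
      then show False using nv by (simp add: orthogonal_def)
    qed
    have "pairwise orthogonal (insert v B)"
      using gB vS unfolding good_eig_def S_def by (auto simp: pairwise_insert orthogonal_commute)
    then have "good_eig Q (insert v B)"
      using gB nv ev unfolding good_eig_def by blast
    then show ?case using fB cB vB by (intro exI[of _ "insert v B"]) auto
  qed
  then obtain B where gB: "good_eig Q B" and fB: "finite B" and cB: "card B = CARD('n)" by auto
  have ind: "independent B" using gB by (rule good_indep)
  have "dim (span B) = card B" using indep_card_eq_dim_span[OF ind] by simp
  then have "dim B = DIM(real^'n)" using cB by simp
  then have "span B = UNIV" using dim_eq_full by metis
  then show ?thesis using gB fB cB by blast
qed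

lemma minimizer:
  fixes Q :: "real^'n^'n"
  assumes sym: "transpose Q = Q" and pd: "\<forall>x. x \<noteq> 0 \<longrightarrow> x \<bullet> (Q *v x) > 0"
  shows "Q *v quad_minimizer Q q = q"
proof -
  have inj: "inj ((*v) Q)"
  proof (rule injI)
    fix x y assume "Q *v x = Q *v y"
    then have "Q *v (x - y) = 0" by (simp add: matrix_vector_mult_diff_distrib)
    then have "(x - y) \<bullet> (Q *v (x - y)) = 0" by simp
    then show "x = y" using pd by (metis less_irrefl right_minus_eq)
  qed
  have "surj ((*v) Q)" by (rule linear_injective_imp_surjective[OF matrix_vector_mul_linear inj]) simp
  then obtain xs where xs: "Q *v xs = q" by (metis surjD)
  have diff: "quad_fun Q q y - quad_fun Q q xs = (1/2) * ((y - xs) \<bullet> (Q *v (y - xs)))" for y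
  proof -
    have s: "xs \<bullet> (Q *v y) = y \<bullet> (Q *v xs)" using sym_inner[OF sym, of xs y] by (simp add: inner_commute)
    show ?thesis unfolding quad_fun_def xs[symmetric]
      using s by (simp add: matrix_vector_mult_diff_distrib inner_diff_left inner_diff_right inner_commute algebra_simps)
  qed
  have "quad_minimizer Q q = xs" unfolding quad_minimizer_def
  proof (rule the_equality)
    show "\<forall>y. quad_fun Q q xs \<le> quad_fun Q q y"
    proof
      fix y
      have "(y - xs) \<bullet> (Q *v (y - xs)) \<ge> 0" using pd by (cases "y - xs = 0") (auto simp: less_imp_le)
      then show "quad_fun Q q xs \<le> quad_fun Q q y" using diff[of y] by simp
    qed
  next
    fix z assume "\<forall>y. quad_fun Q q z \<le> quad_fun Q q y"
    then have "quad_fun Q q z \<le> quad_fun Q q xs" by blast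
    then have "(z - xs) \<bullet> (Q *v (z - xs)) \<le> 0" using diff[of z] by simp
    then show "z = xs" using pd by (metis not_less right_minus_eq)
  qed
  then show ?thesis using xs by simp
qed

lemma proj_rec:
  fixes Q :: "real^'n^'n"
  assumes sym: "transpose Q = Q" and xs: "Q *v xs = q" and eu: "Q *v u = l *\<^sub>R u"
  shows "u \<bullet> (tm_iter \<alpha> \<beta> 0 \<sigma>w Q q ws x0 x1 (Suc (Suc k)) - xs) = (1 + \<beta> - \<alpha> * l) * (u \<bullet> (tm_iter \<alpha> \<beta> 0 \<sigma>w Q q ws x0 x1 (Suc k) - xs))
     + (- \<beta>) * (u \<bullet> (tm_iter \<alpha> \<beta> 0 \<sigma>w Q q ws x0 x1 k - xs)) + \<sigma>w * (u \<bullet> ws k)"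
proof -
  define V where "V = tm_iter \<alpha> \<beta> 0 \<sigma>w Q q ws x0 x1 (Suc k)"
  define U where "U = tm_iter \<alpha> \<beta> 0 \<sigma>w Q q ws x0 x1 k"
  have it: "tm_iter \<alpha> \<beta> 0 \<sigma>w Q q ws x0 x1 (Suc (Suc k)) = V + \<beta> *\<^sub>R (V - U) - \<alpha> *\<^sub>R (Q *v V - q) + \<sigma>w *\<^sub>R ws k"
    unfolding V_def U_def by (simp add: Let_def quad_grad_def)
  have g: "Q *v V - q = Q *v (V - xs)" using xs by (simp add: matrix_vector_mult_diff_distrib)
  have uq: "u \<bullet> (Q *v (V - xs)) = l * (u \<bullet> (V - xs))"
    using sym_inner[OF sym, of u "V - xs"] eu by simp
  have e: "tm_iter \<alpha> \<beta> 0 \<sigma>w Q q ws x0 x1 (Suc (Suc k)) - xs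
      = (V - xs) + \<beta> *\<^sub>R ((V - xs) - (U - xs)) - \<alpha> *\<^sub>R (Q *v (V - xs)) + \<sigma>w *\<^sub>R ws k"
    unfolding it g by (simp add: algebra_simps)
  have "u \<bullet> (tm_iter \<alpha> \<beta> 0 \<sigma>w Q q ws x0 x1 (Suc (Suc k)) - xs) =
     (u \<bullet> (V - xs)) + \<beta> * ((u \<bullet> (V - xs)) - (u \<bullet> (U - xs))) - \<alpha> * (u \<bullet> (Q *v (V - xs))) + \<sigma>w * (u \<bullet> ws k)"
    unfolding e by (simp only: inner_add_right inner_diff_right inner_scaleR_right)
  also have "\<dots> = (1 + \<beta> - \<alpha> * l) * (u \<bullet> (V - xs)) + (- \<beta>) * (u \<bullet> (U - xs)) + \<sigma>w * (u \<bullet> ws k)"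
    unfolding uq by (simp add: algebra_simps)
  finally show ?thesis unfolding V_def U_def .
qed

locale wn_space = prob_space M for M :: "'a measure" +
  fixes w :: "nat \<Rightarrow> 'a \<Rightarrow> real^'n"
  assumes wn: "white_noise M w"
begin

definition sqi :: "('a \<Rightarrow> real) \<Rightarrow> bool" where
  "sqi f \<longleftrightarrow> f \<in> borel_measurable M \<and> integrable M (\<lambda>x. (f x)^2)"

lemma sqi_prod: "sqi f \<Longrightarrow> sqi g \<Longrightarrow> integrable M (\<lambda>x. f x * g x)"
  unfolding sqi_def
proof (elim conjE)
  assume f: "f \<in> borel_measurable M" "integrable M (\<lambda>x. (f x)^2)"
     and g: "g \<in> borel_measurable M" "integrable M (\<lambda>x. (g x)^2)"
  have i: "integrable M (\<lambda>x. (f x)^2 + (g x)^2)" using f g by simp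
  show "integrable M (\<lambda>x. f x * g x)"
  proof (rule Bochner_Integration.integrable_bound[OF i])
    show "(\<lambda>x. f x * g x) \<in> borel_measurable M" using f g by simp
    have "\<bar>a * b\<bar> \<le> a^2 + b^2" for a b :: real
    proof -
      have "0 \<le> (\<bar>a\<bar> - \<bar>b\<bar>)^2" by simp
      then have "2*(\<bar>a\<bar>*\<bar>b\<bar>) \<le> a^2 + b^2" by (simp add: power2_eq_square algebra_simps)
      moreover have "0 \<le> \<bar>a\<bar>*\<bar>b\<bar>" by simp
      ultimately have "\<bar>a\<bar>*\<bar>b\<bar> \<le> a^2 + b^2" by linarith
      then show ?thesis by (simp add: abs_mult)
    qed
    then show "AE x in M. norm (f x * g x) \<le> norm ((f x)^2 + (g x)^2)" by simp
  qed
qed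

lemma sqi_const: "sqi (\<lambda>x. c)"
  unfolding sqi_def by simp

lemma sqi_integrable: "sqi f \<Longrightarrow> integrable M f"
  using sqi_prod[of f "\<lambda>x. 1"] sqi_const by simp

lemma sqi_add: "sqi f \<Longrightarrow> sqi g \<Longrightarrow> sqi (\<lambda>x. f x + g x)"
proof -
  assume f: "sqi f" and g: "sqi g"
  have "integrable M (\<lambda>x. (f x)^2 + 2 * (f x * g x) + (g x)^2)"
    using f g sqi_prod[OF f g] unfolding sqi_def by simp
  moreover have "(\<lambda>x. (f x + g x)^2) = (\<lambda>x. (f x)^2 + 2 * (f x * g x) + (g x)^2)"
    by (simp add: power2_sum algebra_simps)
  ultimately have "integrable M (\<lambda>x. (f x + g x)^2)" by simp
  then show ?thesis using f g unfolding sqi_def by (auto intro: borel_measurable_add)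
qed

lemma sqi_mult: "sqi f \<Longrightarrow> sqi (\<lambda>x. c * f x)"
  unfolding sqi_def by (auto simp: power_mult_distrib)

lemma sqi_sum: "(\<And>i. i \<in> I \<Longrightarrow> sqi (f i)) \<Longrightarrow> sqi (\<lambda>x. \<Sum>i\<in>I. f i x)"
proof (induction I rule: infinite_finite_induct)
  case (infinite A) then show ?case by (simp add: sqi_const)
next
  case empty then show ?case by (simp add: sqi_const)
next
  case (insert i F) then show ?case by (simp add: sqi_add)
qed

lemma sqi_w: "sqi (\<lambda>x. w t x $ i)"
  using wn unfolding white_noise_def sqi_def by blast

lemma int_w: "(\<integral>x. w t x $ i \<partial>M) = 0"
  using wn unfolding white_noise_def by blast

lemma int_ww: "(\<integral>x. w t x $ i * w s x $ j \<partial>M) = (if t = s \<and> i = j then 1 else 0)"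
  using wn unfolding white_noise_def by blast

lemma sqi_G: "sqi (\<lambda>x. u \<bullet> w t x)"
  unfolding inner_vec_def inner_real_def by (intro sqi_sum) (simp add: sqi_mult sqi_w)

lemma int_G: "(\<integral>x. u \<bullet> w t x \<partial>M) = 0"
proof -
  have "(\<integral>x. u \<bullet> w t x \<partial>M) = (\<Sum>i\<in>UNIV. \<integral>x. u $ i * w t x $ i \<partial>M)"
    unfolding inner_vec_def inner_real_def
    by (simp add: Bochner_Integration.integral_sum[of UNIV M "\<lambda>i x. u $ i * w t x $ i"] sqi_integrable[OF sqi_w])
  also have "\<dots> = 0" by (simp add: int_w)
  finally show ?thesis .
qed

lemma int_GG:
  assumes "norm u = 1"
  shows "(\<integral>x. (u \<bullet> w t x) * (u \<bullet> w s x) \<partial>M) = (if t = s then 1 else 0)"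
proof -
  have "(\<lambda>x. (u \<bullet> w t x) * (u \<bullet> w s x)) = (\<lambda>x. \<Sum>i\<in>UNIV. \<Sum>j\<in>UNIV. (u$i * u$j) * (w t x $ i * w s x $ j))"
    unfolding inner_vec_def inner_real_def sum_product by (simp add: mult_ac)
  then have "(\<integral>x. (u \<bullet> w t x) * (u \<bullet> w s x) \<partial>M) = (\<Sum>i\<in>UNIV. \<Sum>j\<in>UNIV. (u$i * u$j) * (\<integral>x. w t x $ i * w s x $ j \<partial>M))"
    using sqi_prod[OF sqi_w sqi_w] by (simp add: Bochner_Integration.integral_sum integrable_sum)
  also have "\<dots> = (if t = s then (\<Sum>i\<in>UNIV. u$i * u$i) else 0)"
    by (simp add: int_ww if_distrib cong: if_cong)
  also have "(\<Sum>i\<in>UNIV. u$i * u$i) = u \<bullet> u" by (simp add: inner_vec_def inner_real_def)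
  also have "u \<bullet> u = 1" using assms by (simp add: norm_eq_1)
  finally show ?thesis .
qed

lemma expect_sq:
  assumes "norm u = 1"
  shows "sqi (\<lambda>x. D + \<sigma> * (\<Sum>s<k. c s * (u \<bullet> w s x)))"
    "(\<integral>x. (D + \<sigma> * (\<Sum>s<k. c s * (u \<bullet> w s x)))^2 \<partial>M) = D^2 + \<sigma>^2 * (\<Sum>s<k. (c s)^2)"
proof -
  define N where "N = (\<lambda>x. \<Sum>s<k. c s * (u \<bullet> w s x))"
  have sN: "sqi N" unfolding N_def by (rule sqi_sum, rule sqi_mult, rule sqi_G)
  have "sqi (\<lambda>x. D + \<sigma> * N x)" by (rule sqi_add[OF sqi_const sqi_mult[OF sN]])
  then show "sqi (\<lambda>x. D + \<sigma> * (\<Sum>s<k. c s * (u \<bullet> w s x)))" by (simp add: N_def)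
  have iN: "integrable M N" by (rule sqi_integrable[OF sN])
  have iNN: "integrable M (\<lambda>x. N x * N x)" by (rule sqi_prod[OF sN sN])
  have EN: "(\<integral>x. N x \<partial>M) = 0" unfolding N_def
    using sqi_integrable[OF sqi_G] by (simp add: int_G)
  have EGN: "(\<integral>x. (u \<bullet> w s x) * N x \<partial>M) = c s" if "s < k" for s
  proof -
    have "(\<integral>x. (u \<bullet> w s x) * N x \<partial>M) = (\<Sum>t<k. c t * (\<integral>x. (u \<bullet> w s x) * (u \<bullet> w t x) \<partial>M))"
      unfolding N_def sum_distrib_left using sqi_prod[OF sqi_G sqi_G]
      by (simp add: Bochner_Integration.integral_sum mult.left_commute)
    also have "\<dots> = (\<Sum>t<k. if s = t then c t else 0)" by (intro sum.cong) (auto simp: int_GG[OF assms])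
    also have "\<dots> = c s" using that by simp
    finally show ?thesis .
  qed
  have ENN: "(\<integral>x. N x * N x \<partial>M) = (\<Sum>s<k. (c s)^2)"
  proof -
    have "(\<integral>x. N x * N x \<partial>M) = (\<Sum>s<k. c s * (\<integral>x. (u \<bullet> w s x) * N x \<partial>M))"
      unfolding N_def[of] sum_distrib_right
      using sqi_prod[OF sqi_G sN] unfolding N_def
      by (simp add: Bochner_Integration.integral_sum mult.assoc)
    also have "\<dots> = (\<Sum>s<k. (c s)^2)" by (simp add: EGN power2_eq_square)
    finally show ?thesis .
  qed
  have "(\<lambda>x. (D + \<sigma> * N x)^2) = (\<lambda>x. D^2 + (2 * D * \<sigma>) * N x + \<sigma>^2 * (N x * N x))"
    by (simp add: power2_eq_square algebra_simps)
  then have "(\<integral>x. (D + \<sigma> * N x)^2 \<partial>M) = D^2 + \<sigma>^2 * (\<Sum>s<k. (c s)^2)"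
    using iN iNN EN ENN by (simp add: prob_space)
  then show "(\<integral>x. (D + \<sigma> * (\<Sum>s<k. c s * (u \<bullet> w s x)))^2 \<partial>M) = D^2 + \<sigma>^2 * (\<Sum>s<k. (c s)^2)"
    unfolding N_def .
qed

end

lemma cesaro0:
  fixes b :: "nat \<Rightarrow> real"
  assumes b: "b \<longlonglongrightarrow> 0"
  shows "(\<lambda>t. (\<Sum>k\<le>t. b k) / real t) \<longlonglongrightarrow> 0"
proof (rule LIMSEQ_I)
  fix r :: real assume r: "0 < r"
  obtain N where N: "\<And>k. k \<ge> N \<Longrightarrow> norm (b k) < r / 4"
    using LIMSEQ_D[OF b, of "r/4"] r by auto
  define C where "C = (\<Sum>k<N. \<bar>b k\<bar>)"
  have C0: "C \<ge> 0" unfolding C_def by (simp add: sum_nonneg)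
  obtain T :: nat where T: "T > 2 * C / r" using reals_Archimedean2 by blast
  show "\<exists>no. \<forall>n\<ge>no. norm ((\<Sum>k\<le>n. b k) / real n - 0) < r"
  proof (intro exI allI impI)
    fix t assume t: "t \<ge> max (max N T) 1"
    then have tN: "t \<ge> N" and tT: "real t \<ge> T" and t1: "t \<ge> 1" by auto
    have split: "{..t} = {..<N} \<union> {N..t}" using tN by auto
    have "\<bar>\<Sum>k\<le>t. b k\<bar> \<le> (\<Sum>k\<le>t. \<bar>b k\<bar>)" by (rule sum_abs)
    also have "\<dots> = C + (\<Sum>k\<in>{N..t}. \<bar>b k\<bar>)" unfolding split C_def
      by (subst sum.union_disjoint) auto
    also have "(\<Sum>k\<in>{N..t}. \<bar>b k\<bar>) \<le> real (card {N..t}) * (r/4)"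
    proof (rule sum_bounded_above)
      fix k assume "k \<in> {N..t}"
      then have "norm (b k) < r/4" using N by auto
      then show "\<bar>b k\<bar> \<le> r/4" by simp
    qed
    also have "real (card {N..t}) \<le> real t + 1" by simp
    finally have "\<bar>\<Sum>k\<le>t. b k\<bar> \<le> C + (real t + 1) * (r/4)" using r by (simp add: mult_right_mono)
    also have "\<dots> \<le> C + real t * (r/2)" using t1 r by simp
    finally have s: "\<bar>\<Sum>k\<le>t. b k\<bar> \<le> C + real t * (r/2)" .
    have tpos: "real t > 0" using t1 by simp
    have "r * real T \<le> r * real t" using tT r by (intro mult_left_mono) auto
    moreover have "2 * C < r * real T" using T r by (simp add: field_simps)
    ultimately have "C < real t * (r/2)" by (simp add: algebra_simps)
    then have "\<bar>\<Sum>k\<le>t. b k\<bar> < real t * r" using s by simp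
    then show "norm ((\<Sum>k\<le>t. b k) / real t - 0) < r" using tpos by (simp add: divide_less_eq abs_div mult.commute)
  qed
qed

lemma cesaro:
  fixes a :: "nat \<Rightarrow> real"
  assumes a: "a \<longlonglongrightarrow> l"
  shows "(\<lambda>t. (1 / real t) * (\<Sum>k\<le>t. a k)) \<longlonglongrightarrow> l"
proof -
  have b: "(\<lambda>k. a k - l) \<longlonglongrightarrow> 0" using tendsto_diff[OF a tendsto_const[of l]] by simp
  have c0: "(\<lambda>t. (\<Sum>k\<le>t. (a k - l)) / real t) \<longlonglongrightarrow> 0" by (rule cesaro0[OF b])
  have c1: "(\<lambda>t. (real t + 1) / real t) \<longlonglongrightarrow> 1"
  proof -
    have "(\<lambda>t. 1 + 1 / real t) \<longlonglongrightarrow> 1 + 0" by (intro tendsto_intros lim_inverse_n')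
    moreover have "\<forall>\<^sub>F t in sequentially. 1 + 1 / real t = (real t + 1) / real t"
      using eventually_gt_at_top[of 0] by eventually_elim (simp add: field_simps)
    ultimately show ?thesis by (simp add: Lim_transform_eventually)
  qed
  have "(\<lambda>t. (\<Sum>k\<le>t. (a k - l)) / real t + ((real t + 1) / real t) * l) \<longlonglongrightarrow> 0 + 1 * l"
    by (intro tendsto_intros c0 c1)
  moreover have "(\<Sum>k\<le>t. (a k - l)) / real t + ((real t + 1) / real t) * l = (1 / real t) * (\<Sum>k\<le>t. a k)" if "t > 0" for t
    using that by (simp add: sum_subtractf field_simps)
  moreover have "\<forall>\<^sub>F t in sequentially. (\<Sum>k\<le>t. (a k - l)) / real t + ((real t + 1) / real t) * l = (1 / real t) * (\<Sum>k\<le>t. a k)"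
    using eventually_gt_at_top[of 0] by eventually_elim (use calculation(2) in blast)
  ultimately show ?thesis using Lim_transform_eventually by fastforce
qed

lemma norm_sq_basis:
  fixes e :: "real^'n"
  assumes "good_eig Q B" "finite B" "span B = UNIV"
  shows "(norm e)^2 = (\<Sum>u\<in>B. (u \<bullet> e)^2)"
proof -
  have "(\<Sum>u\<in>B. (e \<bullet> u) *\<^sub>R u) = e"
    using assms by (intro orthonormal_basis_expand) (auto simp: good_eig_def)
  then have "e \<bullet> e = e \<bullet> (\<Sum>u\<in>B. (e \<bullet> u) *\<^sub>R u)" by simp
  also have "\<dots> = (\<Sum>u\<in>B. (u \<bullet> e)^2)" by (simp add: inner_sum_right power2_eq_square inner_commute)
  finally show ?thesis by (simp add: power2_norm_eq_inner)
qed

context wn_space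
begin

lemma J_formula:
  fixes Q :: "real^'n^'n"
  assumes sym: "transpose Q = Q" and pd: "\<forall>x. x \<noteq> 0 \<longrightarrow> x \<bullet> (Q *v x) > 0"
    and gB: "good_eig Q B" and fB: "finite B" and sB: "span B = UNIV"
    and bb: "\<bar>\<beta>\<bar> < 1" and stab: "\<And>u. u \<in> B \<Longrightarrow> \<bar>1 + \<beta> - \<alpha> * (u \<bullet> (Q *v u))\<bar> < 1 - (-\<beta>)"
  shows "avg_err M w \<alpha> \<beta> 0 \<sigma>w Q q x0 x1 \<longlonglongrightarrow> \<sigma>w^2 * (\<Sum>u\<in>B. lyP (1 + \<beta> - \<alpha> * (u \<bullet> (Q *v u))) (-\<beta>))"
proof -
  define xs where "xs = quad_minimizer Q q"
  have xs: "Q *v xs = q" unfolding xs_def by (rule minimizer[OF sym pd])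
  define lam where "lam u = u \<bullet> (Q *v u)" for u
  define a where "a u = 1 + \<beta> - \<alpha> * lam u" for u
  define D where "D u = hom (a u) (-\<beta>) (u \<bullet> (x0 - xs)) (u \<bullet> (x1 - xs))" for u
  define H where "H u = hom (a u) (-\<beta>) 0 1" for u
  define X where "X k \<omega> = tm_iter \<alpha> \<beta> 0 \<sigma>w Q q (\<lambda>s. w s \<omega>) x0 x1 k" for k \<omega>
  have bb': "\<bar>- \<beta>\<bar> < 1" using bb by simp
  have stab': "\<bar>a u\<bar> < 1 - (-\<beta>)" if "u \<in> B" for u using stab[OF that] unfolding a_def lam_def .
  have nu: "norm u = 1" if "u \<in> B" for u using gB that unfolding good_eig_def by blast
  have eu: "Q *v u = lam u *\<^sub>R u" if "u \<in> B" for u using gB that unfolding good_eig_def lam_def by blast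
  have proj: "u \<bullet> (X k \<omega> - xs) = D u k + \<sigma>w * (\<Sum>s<k. H u (k - 1 - s) * (u \<bullet> w s \<omega>))" if u: "u \<in> B" for u k \<omega>
  proof -
    let ?y = "\<lambda>k. u \<bullet> (X k \<omega> - xs)"
    have r: "?y (Suc (Suc k)) = a u * ?y (Suc k) + (-\<beta>) * ?y k + \<sigma>w * (u \<bullet> w k \<omega>)" for k
      unfolding X_def a_def using proj_rec[OF sym xs eu[OF u], of \<alpha> \<beta> \<sigma>w "\<lambda>s. w s \<omega>" x0 x1 k] by simp
    have "?y k = hom (a u) (-\<beta>) (?y 0) (?y 1) k + (\<Sum>s<k. hom (a u) (-\<beta>) 0 1 (k - 1 - s) * (\<sigma>w * (u \<bullet> w s \<omega>)))"
      by (rule rec_decomp[where g="\<lambda>s. \<sigma>w * (u \<bullet> w s \<omega>)"]) (rule r)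
    moreover have "?y 0 = u \<bullet> (x0 - xs)" "?y 1 = u \<bullet> (x1 - xs)" unfolding X_def by simp_all
    ultimately show ?thesis unfolding D_def H_def by (simp add: sum_distrib_left mult_ac)
  qed
  have Eu: "(\<integral>\<omega>. (u \<bullet> (X k \<omega> - xs))^2 \<partial>M) = (D u k)^2 + \<sigma>w^2 * (\<Sum>j<k. (H u j)^2)"
       "sqi (\<lambda>\<omega>. u \<bullet> (X k \<omega> - xs))" if u: "u \<in> B" for u k
  proof -
    have "(\<integral>\<omega>. (u \<bullet> (X k \<omega> - xs))^2 \<partial>M) = (D u k)^2 + \<sigma>w^2 * (\<Sum>s<k. (H u (k - 1 - s))^2)"
      unfolding proj[OF u] by (rule expect_sq(2)[OF nu[OF u]])
    also have "(\<Sum>s<k. (H u (k - 1 - s))^2) = (\<Sum>j<k. (H u j)^2)"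
      using sum.nat_diff_reindex[of "\<lambda>j. (H u j)^2" k] by simp
    finally show "(\<integral>\<omega>. (u \<bullet> (X k \<omega> - xs))^2 \<partial>M) = (D u k)^2 + \<sigma>w^2 * (\<Sum>j<k. (H u j)^2)" .
    show "sqi (\<lambda>\<omega>. u \<bullet> (X k \<omega> - xs))"
      unfolding proj[OF u] by (rule expect_sq(1)[OF nu[OF u]])
  qed
  have Ek: "(\<integral>\<omega>. (norm (X k \<omega> - xs))^2 \<partial>M) = (\<Sum>u\<in>B. (D u k)^2 + \<sigma>w^2 * (\<Sum>j<k. (H u j)^2))" for k
  proof -
    have "(\<integral>\<omega>. (norm (X k \<omega> - xs))^2 \<partial>M) = (\<integral>\<omega>. (\<Sum>u\<in>B. (u \<bullet> (X k \<omega> - xs))^2) \<partial>M)"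
      using norm_sq_basis[OF gB fB sB] by simp
    also have "\<dots> = (\<Sum>u\<in>B. \<integral>\<omega>. (u \<bullet> (X k \<omega> - xs))^2 \<partial>M)"
      by (rule Bochner_Integration.integral_sum) (use Eu(2) in \<open>auto simp: sqi_def\<close>)
    also have "\<dots> = (\<Sum>u\<in>B. (D u k)^2 + \<sigma>w^2 * (\<Sum>j<k. (H u j)^2))"
      by (rule sum.cong) (simp_all add: Eu(1))
    finally show ?thesis .
  qed
  have limD: "(\<lambda>k. (D u k)^2) \<longlonglongrightarrow> 0" if u: "u \<in> B" for u
  proof -
    have "(\<lambda>k. (D u k)^2) sums lyV (a u) (-\<beta>) (D u 1) (D u 0)"
      by (rule ly_sums[OF bb' stab'[OF u]]) (simp add: D_def)
    then show ?thesis by (intro summable_LIMSEQ_zero) (rule sums_summable)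
  qed
  have limH: "(\<lambda>k. \<Sum>j<k. (H u j)^2) \<longlonglongrightarrow> lyP (a u) (-\<beta>)" if u: "u \<in> B" for u
  proof -
    have "(\<lambda>k. (H u k)^2) sums lyV (a u) (-\<beta>) (H u 1) (H u 0)"
      by (rule ly_sums[OF bb' stab'[OF u]]) (simp add: H_def)
    moreover have "lyV (a u) (-\<beta>) (H u 1) (H u 0) = lyP (a u) (-\<beta>)" by (simp add: H_def lyV_def)
    ultimately show ?thesis by (simp add: sums_def)
  qed
  have "(\<lambda>k. \<Sum>u\<in>B. (D u k)^2 + \<sigma>w^2 * (\<Sum>j<k. (H u j)^2)) \<longlonglongrightarrow> (\<Sum>u\<in>B. 0 + \<sigma>w^2 * lyP (a u) (-\<beta>))"
    by (intro tendsto_sum tendsto_add tendsto_mult tendsto_const limD limH)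
  then have "(\<lambda>k. \<integral>\<omega>. (norm (X k \<omega> - xs))^2 \<partial>M) \<longlonglongrightarrow> \<sigma>w^2 * (\<Sum>u\<in>B. lyP (a u) (-\<beta>))"
    unfolding Ek by (simp add: sum_distrib_left)
  from cesaro[OF this] show ?thesis
    unfolding avg_err_def X_def xs_def a_def lam_def .
qed

end

definition diagm :: "('n::finite \<Rightarrow> real) \<Rightarrow> real^'n^'n" where
  "diagm d = (\<chi> i j. if i = j then d i else 0)"

lemma diagm_mult: "diagm d *v x = (\<chi> i. d i * x $ i)"
proof -
  have "(\<Sum>j\<in>UNIV. (if i = j then d i else 0) * x $ j) = d i * x $ i" for i
  proof -
    have "(\<Sum>j\<in>UNIV. (if i = j then d i else 0) * x $ j) = (\<Sum>j\<in>UNIV. if j = i then d i * x $ i else 0)"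
      by (rule sum.cong) auto
    then show ?thesis by simp
  qed
  then show ?thesis unfolding diagm_def matrix_vector_mult_def by (simp add: vec_eq_iff)
qed

lemma diagm_sym: "transpose (diagm d) = diagm d"
  unfolding diagm_def transpose_def by (simp add: vec_eq_iff)

lemma diagm_axis: "diagm d *v axis i 1 = d i *\<^sub>R axis i 1"
  unfolding diagm_mult by (simp add: vec_eq_iff axis_def)

lemma diagm_quad: "x \<bullet> (diagm d *v x) = (\<Sum>i\<in>UNIV. d i * (x $ i)^2)"
  unfolding diagm_mult inner_vec_def by (simp add: power2_eq_square mult_ac)

lemma diagm_eig: "mat_eigenvalue (diagm d) mu \<Longrightarrow> \<exists>i. mu = d i"
proof -
  assume "mat_eigenvalue (diagm d) mu"
  then obtain v where v: "v \<noteq> 0" "diagm d *v v = mu *s v" unfolding mat_eigenvalue_def by blast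
  obtain i where i: "v $ i \<noteq> 0" using v(1) by (metis vec_eq_iff zero_index)
  have "d i * v $ i = mu * v $ i" using arg_cong[OF v(2), of "\<lambda>x. x $ i"] by (simp add: diagm_mult)
  then show ?thesis using i by auto
qed

lemma diagm_eig_i: "mat_eigenvalue (diagm d) (d i)"
  unfolding mat_eigenvalue_def
proof (intro exI[of _ "axis i 1"] conjI)
  show "axis i (1::real) \<noteq> 0" by (metis axis_nth zero_index one_neq_zero)
  show "diagm d *v axis i 1 = d i *s axis i 1" by (simp add: diagm_axis scalar_mult_eq_scaleR)
qed

lemma diagm_QmL:
  assumes "\<And>i. m \<le> d i" "\<And>i. d i \<le> L" "d i1 = m" "d i2 = L" "0 < m"
  shows "in_QmL m L (diagm d)"
  unfolding in_QmL_def
proof (intro conjI allI impI)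
  show "transpose (diagm d) = diagm d" by (rule diagm_sym)
  fix x :: "real^'a" assume "x \<noteq> 0"
  then obtain i where i: "x $ i \<noteq> 0" by (metis vec_eq_iff zero_index)
  have pos: "d j > 0" for j using assms(1,5)[of] by (meson less_le_trans)
  have "0 < d i * (x $ i)^2" using i pos by simp
  also have "\<dots> \<le> (\<Sum>j\<in>UNIV. d j * (x $ j)^2)"
  proof (rule member_le_sum)
    fix j assume "j \<in> UNIV - {i}"
    show "0 \<le> d j * (x $ j)^2" using pos[of j] by simp
  qed auto
  finally show "0 < x \<bullet> (diagm d *v x)" by (simp add: diagm_quad)
next
  show "mat_eigenvalue (diagm d) L" using diagm_eig_i[of d i2] assms by simp
  show "mat_eigenvalue (diagm d) m" using diagm_eig_i[of d i1] assms by simp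
  fix mu assume "mat_eigenvalue (diagm d) mu"
  then obtain i where "mu = d i" using diagm_eig by blast
  then show "mu \<le> L" using assms by simp
next
  fix mu assume "mat_eigenvalue (diagm d) mu"
  then obtain i where "mu = d i" using diagm_eig by blast
  then show "m \<le> mu" using assms by simp
qed

lemma diagm_basis:
  "good_eig (diagm d) (range (\<lambda>i. axis i 1))" "finite (range (\<lambda>i::'n::finite. axis i (1::real)))"
  "span (range (\<lambda>i::'n::finite. axis i (1::real))) = UNIV"
  "inj (\<lambda>i::'n. axis i (1::real))"
  "(axis i 1) \<bullet> (diagm d *v axis i 1) = d i"
proof -
  show "inj (\<lambda>i::'n. axis i (1::real))" by (rule injI) (simp add: axis_eq_axis)
  have "range (\<lambda>i::'n. axis i (1::real)) = Basis" unfolding Basis_vec_def by auto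
  then show "span (range (\<lambda>i::'n::finite. axis i (1::real))) = UNIV" by simp
  show "finite (range (\<lambda>i::'n::finite. axis i (1::real)))" by simp
  show "(axis i 1) \<bullet> (diagm d *v axis i 1) = d i" by (simp add: diagm_axis inner_axis_axis)
  show "good_eig (diagm d) (range (\<lambda>i. axis i 1))" unfolding good_eig_def
    by (auto simp: pairwise_def orthogonal_def inner_axis_axis diagm_axis norm_eq_1)
qed

definition pfn :: "real \<Rightarrow> real \<Rightarrow> real \<Rightarrow> real \<Rightarrow> real \<Rightarrow> real" where
  "pfn \<alpha> \<beta> m L l = (1 + \<beta>) / ((1 - \<beta>) * \<alpha>^2 * (l * (m + L - l)))"

lemma stab_pf:
  assumes mpos: "0 < m" and l: "m \<le> l" "l \<le> L" and bb: "\<bar>\<beta>\<bar> < 1" and apos: "\<alpha> > 0"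
    and key: "\<alpha> * (m + L) = 2 * (1 + \<beta>)"
  shows "\<bar>1 + \<beta> - \<alpha> * l\<bar> < 1 - (-\<beta>)" "lyP (1 + \<beta> - \<alpha> * l) (-\<beta>) = pfn \<alpha> \<beta> m L l"
proof -
  have l0: "\<alpha> * l > 0" using mpos l apos by simp
  have "\<alpha> * l < \<alpha> * (m + L)" using mpos l apos by simp
  then have l2: "\<alpha> * l < 2 * (1 + \<beta>)" using key by simp
  show "\<bar>1 + \<beta> - \<alpha> * l\<bar> < 1 - (-\<beta>)" using l0 l2 by (simp add: abs_less_iff)
  have "(1 - - \<beta>)^2 - (1 + \<beta> - \<alpha> * l)^2 = \<alpha> * l * (2 * (1 + \<beta>) - \<alpha> * l)"
    by (simp add: power2_eq_square algebra_simps)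
  also have "\<dots> = \<alpha>^2 * (l * (m + L - l))" unfolding key[symmetric] by (simp add: power2_eq_square algebra_simps)
  finally show "lyP (1 + \<beta> - \<alpha> * l) (-\<beta>) = pfn \<alpha> \<beta> m L l"
    unfolding lyP_def pfn_def by (simp add: mult_ac)
qed

lemma pf_bounds:
  assumes mpos: "0 < m" and l: "m \<le> l" "l \<le> L" and bb: "\<bar>\<beta>\<bar> < 1" and apos: "\<alpha> > 0"
  shows "pfn \<alpha> \<beta> m L l \<le> pfn \<alpha> \<beta> m L L" "pfn \<alpha> \<beta> m L ((m+L)/2) \<le> pfn \<alpha> \<beta> m L l"
    "pfn \<alpha> \<beta> m L m = pfn \<alpha> \<beta> m L L"
proof -
  define K where "K = (1 + \<beta>) / ((1 - \<beta>) * \<alpha>^2)"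
  have K: "K > 0" unfolding K_def using bb apos by (simp add: abs_less_iff)
  have pf: "pfn \<alpha> \<beta> m L x = K / (x * (m + L - x))" for x unfolding pfn_def K_def by simp
  have d1: "L * m \<le> l * (m + L - l)"
  proof -
    have "0 \<le> (l - m) * (L - l)" using l by simp
    then show ?thesis by (simp add: algebra_simps)
  qed
  have d0: "L * m > 0" using mpos l by simp
  have d2: "l * (m + L - l) \<le> ((m + L)/2) * (m + L - (m + L)/2)"
  proof -
    have "0 \<le> (l - (m + L)/2)^2" by simp
    moreover have "((m + L)/2) * (m + L - (m + L)/2) - l * (m + L - l) = (l - (m + L)/2)^2"
      by (simp add: power2_eq_square field_simps)
    ultimately show ?thesis by linarith
  qed
  have a0: "l * (m + L - l) > 0" using d0 d1 by linarith
  have eL: "L * (m + L - L) = L * m" by simp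
  show "pfn \<alpha> \<beta> m L l \<le> pfn \<alpha> \<beta> m L L" unfolding pf eL
    by (rule divide_left_mono[OF d1]) (use K a0 d0 in auto)
  show "pfn \<alpha> \<beta> m L ((m+L)/2) \<le> pfn \<alpha> \<beta> m L l" unfolding pf
    by (rule divide_left_mono[OF d2]) (use K a0 d2 in \<open>auto intro: mult_pos_pos\<close>)
  show "pfn \<alpha> \<beta> m L m = pfn \<alpha> \<beta> m L L" unfolding pf by (simp add: mult.commute)
qed


lemma QmL_basis:
  fixes Q :: "real^'n^'n"
  assumes Q: "in_QmL m L Q"
  shows "\<exists>B. good_eig Q B \<and> finite B \<and> card B = CARD('n) \<and> span B = UNIV
     \<and> (\<forall>u\<in>B. m \<le> u \<bullet> (Q *v u) \<and> u \<bullet> (Q *v u) \<le> L)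
     \<and> (\<exists>u\<in>B. u \<bullet> (Q *v u) = m) \<and> (\<exists>u\<in>B. u \<bullet> (Q *v u) = L)"
proof -
  have sym: "transpose Q = Q" using Q unfolding in_QmL_def by blast
  obtain B where gB: "good_eig Q B" and fB: "finite B" and cB: "card B = CARD('n)" and sB: "span B = UNIV"
    using spectral_ex[OF sym] by blast
  have eig: "mat_eigenvalue Q (u \<bullet> (Q *v u))" if "u \<in> B" for u
  proof -
    have n1: "norm u = 1" and e: "Q *v u = (u \<bullet> (Q *v u)) *\<^sub>R u" using gB that unfolding good_eig_def by blast+
    have "u \<noteq> 0" using n1 by auto
    then show ?thesis unfolding mat_eigenvalue_def scalar_mult_eq_scaleR using e by blast
  qed
  have rng: "\<forall>u\<in>B. m \<le> u \<bullet> (Q *v u) \<and> u \<bullet> (Q *v u) \<le> L" using eig Q unfolding in_QmL_def by blast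
  have hit: "\<exists>u\<in>B. u \<bullet> (Q *v u) = mu" if mu: "mat_eigenvalue Q mu" for mu
  proof (rule ccontr)
    assume nh: "\<not> (\<exists>u\<in>B. u \<bullet> (Q *v u) = mu)"
    obtain v where v: "v \<noteq> 0" "Q *v v = mu *\<^sub>R v" using mu unfolding mat_eigenvalue_def scalar_mult_eq_scaleR by blast
    have z: "v \<bullet> u = 0" if u: "u \<in> B" for u
    proof -
      have eu: "Q *v u = (u \<bullet> (Q *v u)) *\<^sub>R u" using gB u unfolding good_eig_def by blast
      have "u \<bullet> (Q *v v) = (Q *v u) \<bullet> v" by (rule sym_inner[OF sym])
      then have "mu * (u \<bullet> v) = (u \<bullet> (Q *v u)) * (u \<bullet> v)" by (metis v(2) eu inner_scaleR_left inner_scaleR_right)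
      then have "(mu - u \<bullet> (Q *v u)) * (u \<bullet> v) = 0" by (simp add: algebra_simps)
      then show ?thesis using nh u by (auto simp: inner_commute)
    qed
    have "(\<Sum>u\<in>B. (v \<bullet> u) *\<^sub>R u) = v"
      using gB fB sB by (intro orthonormal_basis_expand) (auto simp: good_eig_def)
    then have "v = 0" using z by simp
    then show False using v by simp
  qed
  have h1: "\<exists>u\<in>B. u \<bullet> (Q *v u) = m" by (rule hit) (use Q in \<open>simp add: in_QmL_def\<close>)
  have h2: "\<exists>u\<in>B. u \<bullet> (Q *v u) = L" by (rule hit) (use Q in \<open>simp add: in_QmL_def\<close>)
  show ?thesis using gB fB cB sB rng h1 h2 by blast
qed


context wn_space
begin

lemma main_noise:
  fixes m L \<alpha> \<beta> \<sigma>w :: real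
  assumes mpos: "0 < m" and mL: "m \<le> L" and n2: "CARD('n) \<ge> 2" and bb: "\<bar>\<beta>\<bar> < 1" and apos: "\<alpha> > 0"
    and key: "\<alpha> * (m + L) = 2 * (1 + \<beta>)"
  shows "noise_amp_exists M w \<alpha> \<beta> 0 \<sigma>w m L x0 x1
   \<and> is_max_of (noise_amp_set M w \<alpha> \<beta> 0 \<sigma>w m L x0 x1) (\<sigma>w^2 * (real CARD('n) * pfn \<alpha> \<beta> m L L))
   \<and> is_min_of (noise_amp_set M w \<alpha> \<beta> 0 \<sigma>w m L x0 x1)
        (\<sigma>w^2 * (pfn \<alpha> \<beta> m L m + pfn \<alpha> \<beta> m L L + (real CARD('n) - 2) * pfn \<alpha> \<beta> m L ((m+L)/2)))"
proof -
  let ?pf = "pfn \<alpha> \<beta> m L"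
  let ?Jmax = "\<sigma>w^2 * (real CARD('n) * ?pf L)"
  let ?Jmin = "\<sigma>w^2 * (?pf m + ?pf L + (real CARD('n) - 2) * ?pf ((m+L)/2))"
  have s2: "\<sigma>w^2 \<ge> 0" by simp
  have genQ: "\<exists>B. avg_err M w \<alpha> \<beta> 0 \<sigma>w Q q x0 x1 \<longlonglongrightarrow> \<sigma>w^2 * (\<Sum>u\<in>B. ?pf (u \<bullet> (Q *v u)))
     \<and> finite B \<and> card B = CARD('n) \<and> (\<forall>u\<in>B. m \<le> u \<bullet> (Q *v u) \<and> u \<bullet> (Q *v u) \<le> L)
     \<and> (\<exists>u\<in>B. u \<bullet> (Q *v u) = m) \<and> (\<exists>u\<in>B. u \<bullet> (Q *v u) = L)"
    if Q: "in_QmL m L Q" for Q :: "real^'n^'n" and q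
  proof -
    obtain B where gB: "good_eig Q B" and fB: "finite B" and cB: "card B = CARD('n)" and sB: "span B = UNIV"
      and rng: "\<forall>u\<in>B. m \<le> u \<bullet> (Q *v u) \<and> u \<bullet> (Q *v u) \<le> L"
      and hm: "\<exists>u\<in>B. u \<bullet> (Q *v u) = m" and hL: "\<exists>u\<in>B. u \<bullet> (Q *v u) = L"
      using QmL_basis[OF Q] by blast
    have sym: "transpose Q = Q" and pd: "\<forall>x. x \<noteq> 0 \<longrightarrow> x \<bullet> (Q *v x) > 0" using Q unfolding in_QmL_def by auto
    have "avg_err M w \<alpha> \<beta> 0 \<sigma>w Q q x0 x1 \<longlonglongrightarrow> \<sigma>w^2 * (\<Sum>u\<in>B. lyP (1 + \<beta> - \<alpha> * (u \<bullet> (Q *v u))) (-\<beta>))"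
    proof (rule J_formula[OF sym pd gB fB sB bb])
      fix u assume "u \<in> B"
      then have "m \<le> u \<bullet> (Q *v u)" "u \<bullet> (Q *v u) \<le> L" using rng by auto
      then show "\<bar>1 + \<beta> - \<alpha> * (u \<bullet> (Q *v u))\<bar> < 1 - - \<beta>" by (rule stab_pf(1)[OF mpos _ _ bb apos key])
    qed
    moreover have "(\<Sum>u\<in>B. lyP (1 + \<beta> - \<alpha> * (u \<bullet> (Q *v u))) (-\<beta>)) = (\<Sum>u\<in>B. ?pf (u \<bullet> (Q *v u)))"
    proof (rule sum.cong)
      fix u assume "u \<in> B"
      then have "m \<le> u \<bullet> (Q *v u)" "u \<bullet> (Q *v u) \<le> L" using rng by auto
      then show "lyP (1 + \<beta> - \<alpha> * (u \<bullet> (Q *v u))) (-\<beta>) = ?pf (u \<bullet> (Q *v u))" by (rule stab_pf(2)[OF mpos _ _ bb apos key])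
    qed simp
    ultimately have "avg_err M w \<alpha> \<beta> 0 \<sigma>w Q q x0 x1 \<longlonglongrightarrow> \<sigma>w^2 * (\<Sum>u\<in>B. ?pf (u \<bullet> (Q *v u)))" by simp
    then show ?thesis using fB cB rng hm hL by blast
  qed
  have ex: "noise_amp_exists M w \<alpha> \<beta> 0 \<sigma>w m L x0 x1"
    unfolding noise_amp_exists_def
  proof (intro allI impI)
    fix Q q assume "in_QmL m L (Q::real^'n^'n)"
    from genQ[OF this, of q] obtain B where "avg_err M w \<alpha> \<beta> 0 \<sigma>w Q q x0 x1 \<longlonglongrightarrow> \<sigma>w^2 * (\<Sum>u\<in>B. ?pf (u \<bullet> (Q *v u)))"
      by (elim exE conjE)
    then show "convergent (avg_err M w \<alpha> \<beta> 0 \<sigma>w Q q x0 x1)" by (rule convergentI)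
  qed
  have bnds: "v \<le> ?Jmax \<and> ?Jmin \<le> v" if vS: "v \<in> noise_amp_set M w \<alpha> \<beta> 0 \<sigma>w m L x0 x1" for v
  proof -
    obtain Q q where Q: "in_QmL m L Q" and v: "v = noise_amp M w \<alpha> \<beta> 0 \<sigma>w Q q x0 x1"
      using vS unfolding noise_amp_set_def mem_Collect_eq by (elim exE conjE) (rule that)
    obtain B where lim: "avg_err M w \<alpha> \<beta> 0 \<sigma>w Q q x0 x1 \<longlonglongrightarrow> \<sigma>w^2 * (\<Sum>u\<in>B. ?pf (u \<bullet> (Q *v u)))"
      and fB: "finite B" and cB: "card B = CARD('n)" and rng: "\<forall>u\<in>B. m \<le> u \<bullet> (Q *v u) \<and> u \<bullet> (Q *v u) \<le> L"
      and hm: "\<exists>u\<in>B. u \<bullet> (Q *v u) = m" and hL: "\<exists>u\<in>B. u \<bullet> (Q *v u) = L"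
      using genQ[OF Q, of q] by (elim exE conjE) (rule that)
    have v': "v = \<sigma>w^2 * (\<Sum>u\<in>B. ?pf (u \<bullet> (Q *v u)))" unfolding v noise_amp_def using lim by (rule limI)
    have up: "(\<Sum>u\<in>B. ?pf (u \<bullet> (Q *v u))) \<le> real CARD('n) * ?pf L"
    proof -
      have "(\<Sum>u\<in>B. ?pf (u \<bullet> (Q *v u))) \<le> (\<Sum>u\<in>B. ?pf L)"
        by (rule sum_mono) (use rng pf_bounds(1)[OF mpos _ _ bb apos] in blast)
      then show ?thesis using cB by simp
    qed
    have lo: "?pf m + ?pf L + (real CARD('n) - 2) * ?pf ((m+L)/2) \<le> (\<Sum>u\<in>B. ?pf (u \<bullet> (Q *v u)))"
    proof (cases "m = L")
      case True
      have "(\<Sum>u\<in>B. ?pf (u \<bullet> (Q *v u))) = (\<Sum>u\<in>B. ?pf m)"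
        by (rule sum.cong) (use rng True in \<open>auto intro: antisym\<close>)
      also have "\<dots> = real CARD('n) * ?pf m" using cB by simp
      finally show ?thesis using True by (simp add: algebra_simps)
    next
      case False
      obtain um where um: "um \<in> B" "um \<bullet> (Q *v um) = m" using hm by blast
      obtain uL where uL: "uL \<in> B" "uL \<bullet> (Q *v uL) = L" using hL by blast
      have ne: "um \<noteq> uL" using um uL False by auto
      have "(\<Sum>u\<in>B. ?pf (u \<bullet> (Q *v u))) = ?pf m + ?pf L + (\<Sum>u\<in>B - {um, uL}. ?pf (u \<bullet> (Q *v u)))"
      proof -
        have "(\<Sum>u\<in>B. ?pf (u \<bullet> (Q *v u))) = (\<Sum>u\<in>{um, uL}. ?pf (u \<bullet> (Q *v u))) + (\<Sum>u\<in>B - {um, uL}. ?pf (u \<bullet> (Q *v u)))"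
        proof -
          have sub: "{um, uL} \<subseteq> B" using um uL by simp
          show ?thesis using sum.subset_diff[OF sub fB, of "\<lambda>u. ?pf (u \<bullet> (Q *v u))"] by linarith
        qed
        then show ?thesis using um uL ne by simp
      qed
      moreover have "real (card (B - {um, uL})) * ?pf ((m+L)/2) \<le> (\<Sum>u\<in>B - {um, uL}. ?pf (u \<bullet> (Q *v u)))"
        by (rule sum_bounded_below) (use rng pf_bounds(2)[OF mpos _ _ bb apos] in blast)
      moreover have "card (B - {um, uL}) = CARD('n) - 2" using cB um uL ne fB
        by (simp add: card_Diff_subset)
      moreover have "real (CARD('n) - 2) = real CARD('n) - 2" using n2 by simp
      ultimately show ?thesis by simp
    qed
    show ?thesis unfolding v' using up lo s2 by (simp add: mult_left_mono)
  qed
  obtain i1 i2 :: 'n where i12: "i1 \<noteq> i2"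
  proof -
    have "\<not> (\<forall>i j :: 'n. i = j)"
    proof
      assume "\<forall>i j :: 'n. i = j"
      then have "CARD('n) \<le> Suc 0" by (subst card_le_Suc0_iff_eq) auto
      then show False using n2 by simp
    qed
    then show ?thesis using that by blast
  qed
  have diagJ: "noise_amp M w \<alpha> \<beta> 0 \<sigma>w (diagm d) 0 x0 x1 = \<sigma>w^2 * (\<Sum>i\<in>UNIV. ?pf (d i))"
    if d: "\<And>i. m \<le> d i" "\<And>i. d i \<le> L" "d i1 = m" "d i2 = L" for d :: "'n \<Rightarrow> real"
  proof -
    let ?B = "range (\<lambda>i::'n. axis i (1::real))"
    have "avg_err M w \<alpha> \<beta> 0 \<sigma>w (diagm d) 0 x0 x1 \<longlonglongrightarrow> \<sigma>w^2 * (\<Sum>u\<in>?B. lyP (1 + \<beta> - \<alpha> * (u \<bullet> (diagm d *v u))) (-\<beta>))"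
    proof (rule J_formula[OF diagm_sym _ diagm_basis(1,2,3) bb])
      show "\<forall>x. x \<noteq> 0 \<longrightarrow> x \<bullet> (diagm d *v x) > 0"
        using diagm_QmL[of m d L i1 i2, OF d mpos] unfolding in_QmL_def by blast
      show "\<And>u. u \<in> ?B \<Longrightarrow> \<bar>1 + \<beta> - \<alpha> * (u \<bullet> (diagm d *v u))\<bar> < 1 - - \<beta>"
        using stab_pf(1)[OF mpos d(1) d(2) bb apos key] by (auto simp: diagm_basis(5))
    qed
    also have "(\<Sum>u\<in>?B. lyP (1 + \<beta> - \<alpha> * (u \<bullet> (diagm d *v u))) (-\<beta>)) = (\<Sum>i\<in>UNIV. ?pf (d i))"
      by (simp add: sum.reindex[OF diagm_basis(4)] diagm_basis(5) stab_pf(2)[OF mpos d(1) d(2) bb apos key])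
    finally show ?thesis unfolding noise_amp_def by (rule limI)
  qed
  have mid: "m \<le> (m+L)/2" "(m+L)/2 \<le> L" using mL by auto
  define d1 where "d1 = (\<lambda>i::'n. if i = i1 then m else L)"
  have d1: "\<And>i. m \<le> d1 i" "\<And>i. d1 i \<le> L" "d1 i1 = m" "d1 i2 = L" using mL i12 by (auto simp: d1_def)
  have pe: "?pf (d1 i) = ?pf L" for i using pf_bounds(3)[OF mpos order_refl mL bb apos] by (simp add: d1_def)
  have "(\<Sum>i\<in>UNIV. ?pf (d1 i)) = (\<Sum>i\<in>(UNIV::'n set). ?pf L)" by (simp only: pe)
  then have J1: "noise_amp M w \<alpha> \<beta> 0 \<sigma>w (diagm d1) 0 x0 x1 = ?Jmax" using diagJ[OF d1] by simp
  have Q1: "in_QmL m L (diagm d1)" by (rule diagm_QmL[OF d1 mpos])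
  have inmax: "?Jmax \<in> noise_amp_set M w \<alpha> \<beta> 0 \<sigma>w m L x0 x1"
    unfolding noise_amp_set_def using J1 Q1 by (metis (mono_tags, lifting) mem_Collect_eq)
  define d2 where "d2 = (\<lambda>i::'n. if i = i1 then m else if i = i2 then L else (m+L)/2)"
  have d2: "\<And>i. m \<le> d2 i" "\<And>i. d2 i \<le> L" "d2 i1 = m" "d2 i2 = L" using mL i12 by (auto simp: d2_def)
  have "(\<Sum>i\<in>UNIV. ?pf (d2 i)) = ?pf m + ?pf L + (real CARD('n) - 2) * ?pf ((m+L)/2)"
  proof -
    have sub: "{i1, i2} \<subseteq> (UNIV::'n set)" by simp
    have "(\<Sum>i\<in>UNIV. ?pf (d2 i)) = (\<Sum>i\<in>UNIV - {i1, i2}. ?pf (d2 i)) + (\<Sum>i\<in>{i1, i2}. ?pf (d2 i))"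
      by (rule sum.subset_diff[OF sub]) simp
    also have "(\<Sum>i\<in>{i1, i2}. ?pf (d2 i)) = ?pf m + ?pf L" using i12 d2 by simp
    also have "(\<Sum>i\<in>UNIV - {i1, i2}. ?pf (d2 i)) = (\<Sum>i\<in>UNIV - {i1, i2}. ?pf ((m+L)/2))"
      by (rule sum.cong) (auto simp: d2_def)
    also have "\<dots> = real (CARD('n) - 2) * ?pf ((m+L)/2)" using i12 by (simp add: card_Diff_subset numeral_2_eq_2)
    also have "real (CARD('n) - 2) = real CARD('n) - 2" using n2 by simp
    finally show ?thesis by simp
  qed
  then have J2: "noise_amp M w \<alpha> \<beta> 0 \<sigma>w (diagm d2) 0 x0 x1 = ?Jmin" using diagJ[OF d2] by simp
  have Q2: "in_QmL m L (diagm d2)" by (rule diagm_QmL[OF d2 mpos])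
  have inmin: "?Jmin \<in> noise_amp_set M w \<alpha> \<beta> 0 \<sigma>w m L x0 x1"
    unfolding noise_amp_set_def using J2 Q2 by (metis (mono_tags, lifting) mem_Collect_eq)
  show ?thesis unfolding is_max_of_def is_min_of_def using ex inmax inmin bnds by blast
qed

end

lemma E12:
  fixes \<rho> \<kappa> X :: real
  assumes r: "0 < \<rho>" "\<rho> < 1" and k: "1 \<le> \<kappa>"
    and X: "X = (\<kappa> - (1 + \<rho>) / (1 - \<rho>)) / (\<kappa> + (1 + \<rho>) / (1 - \<rho>))"
  shows "(1 + \<rho>) * (1 + X) = \<kappa> * (1 - \<rho>) * (1 - X)" "2 * (1 + X * \<rho>) = (1 - \<rho>) * (1 - X) * (\<kappa> + 1)"
proof -
  define A where "A = (1 + \<rho>) / (1 - \<rho>)"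
  have A: "A * (1 - \<rho>) = 1 + \<rho>" "A > 0" using r by (auto simp: A_def)
  have kA: "\<kappa> + A > 0" using k A by simp
  have XA: "X * (\<kappa> + A) = \<kappa> - A" using kA unfolding X A_def[symmetric] by simp
  have "(1 + \<rho>) * (1 + X) = A * (1 - \<rho>) * (1 + X)" using A by simp
  also have "A * (1 + X) = \<kappa> * (1 - X)" using XA by (simp add: algebra_simps)
  then have "A * (1 - \<rho>) * (1 + X) = \<kappa> * (1 - \<rho>) * (1 - X)" by (metis mult.assoc mult.commute)
  finally show e1: "(1 + \<rho>) * (1 + X) = \<kappa> * (1 - \<rho>) * (1 - X)" .
  have "2 * (1 + X * \<rho>) * (\<kappa> + A) = 2 * (\<kappa> + A) + 2 * \<rho> * (X * (\<kappa> + A))" by (simp add: algebra_simps)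
  also have "\<dots> = 2 * (\<kappa> + A) + 2 * \<rho> * (\<kappa> - A)" unfolding XA ..
  also have "\<dots> = 2 * ((1 + \<rho>) * \<kappa> + A * (1 - \<rho>))" by (simp add: algebra_simps)
  also have "\<dots> = 2 * (1 + \<rho>) * (\<kappa> + 1)" using A by (simp add: algebra_simps)
  also have "\<dots> = 2 * A * (1 - \<rho>) * (\<kappa> + 1)" using A by simp
  also have "2 * A = (1 - X) * (\<kappa> + A)" using XA by (simp add: algebra_simps)
  finally have "2 * (1 + X * \<rho>) * (\<kappa> + A) = (1 - \<rho>) * (1 - X) * (\<kappa> + 1) * (\<kappa> + A)" by (simp add: mult_ac)
  then show "2 * (1 + X * \<rho>) = (1 - \<rho>) * (1 - X) * (\<kappa> + 1)" using kA by simp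
qed

lemma idents:
  fixes \<rho> \<kappa> X m L \<alpha> \<beta> :: real
  assumes r: "0 < \<rho>" "\<rho> < 1" and mpos: "0 < m" and Lk: "L = \<kappa> * m" and k: "1 \<le> \<kappa>"
    and Xb: "\<bar>X\<bar> < 1" and XR: "\<bar>X * \<rho>\<bar> < 1"
    and E1: "(1 + \<rho>) * (1 + X) = \<kappa> * (1 - \<rho>) * (1 - X)"
    and E2: "2 * (1 + X * \<rho>) = (1 - \<rho>) * (1 - X) * (\<kappa> + 1)"
    and al: "\<alpha> = (1 + \<rho>) * (1 + X) / L" and be: "\<beta> = X * \<rho>"
  shows "\<alpha> * (m + L) = 2 * (1 + \<beta>)"
    "(1 + \<beta>) / ((1 - \<beta>) * \<alpha>^2 * (L * (m + L - L))) =
       (1 - \<rho>) * ((1 - X) / (1 - X * \<rho>) / (2 * (1 + \<rho>)^2 * (1 + X)^2)) * \<kappa> * (\<kappa> + 1)"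
    "(1 + \<beta>) / ((1 - \<beta>) * \<alpha>^2 * ((m + L)/2 * (m + L - (m + L)/2))) =
       (1 - \<rho>) * \<kappa> * ((1 - X) / (1 - X * \<rho>) / ((1 + \<rho>) * (1 + X * \<rho>) * (1 + X)))"
    "\<alpha>^2 * ((1 + \<beta>) / ((1 - \<beta>) * \<alpha>^2 * (L * (m + L - L)))) =
       (1 - \<rho>) * ((1 - X) / (1 - X * \<rho>) / (2 * L^2)) * \<kappa> * (\<kappa> + 1)"
    "\<alpha>^2 * ((1 + \<beta>) / ((1 - \<beta>) * \<alpha>^2 * ((m + L)/2 * (m + L - (m + L)/2)))) =
       (1 - \<rho>) * \<kappa> * ((1 - X) / (1 - X * \<rho>) * ((1 + X) / (1 + X * \<rho>)) * (1 + \<rho>) / L^2)"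
proof -
  have L0: "L > 0" using Lk k mpos by simp
  have nz: "1 + X \<noteq> 0" "1 - X \<noteq> 0" "1 + X * \<rho> \<noteq> 0" "1 - X * \<rho> \<noteq> 0" "1 + \<rho> \<noteq> 0" "1 - \<rho> \<noteq> 0"
    using Xb XR r by (auto simp: abs_less_iff)
  have a0: "\<alpha> \<noteq> 0" using nz L0 al by simp
  have mL: "m + L = m * (1 + \<kappa>)" using Lk by (simp add: algebra_simps)
  show key: "\<alpha> * (m + L) = 2 * (1 + \<beta>)"
  proof -
    have "\<alpha> * (m + L) = (1 + \<rho>) * (1 + X) * (1 + \<kappa>) / \<kappa>" unfolding al mL Lk using mpos k by (simp add: field_simps)
    also have "\<dots> = (1 - \<rho>) * (1 - X) * (\<kappa> + 1)" unfolding E1 using k by (simp add: field_simps)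
    also have "\<dots> = 2 * (1 + \<beta>)" using E2 be by simp
    finally show ?thesis .
  qed
  define P where "P = (1 + \<rho>)^2 * (1 + X)^2"
  have P0: "P \<noteq> 0" using nz unfolding P_def by simp
  have aLm: "\<alpha>^2 * (L * (m + L - L)) = P / \<kappa>" unfolding al P_def Lk using mpos k
    by (simp add: field_simps power2_eq_square)
  have E2': "(1 - \<rho>) * (1 - X) * (\<kappa> + 1) = 2 * (1 + \<beta>)" using E2 be by simp
  show "(1 + \<beta>) / ((1 - \<beta>) * \<alpha>^2 * (L * (m + L - L))) =
       (1 - \<rho>) * ((1 - X) / (1 - X * \<rho>) / (2 * (1 + \<rho>)^2 * (1 + X)^2)) * \<kappa> * (\<kappa> + 1)"
  proof -
    have "(1 - \<rho>) * ((1 - X) / (1 - X * \<rho>) / (2 * (1 + \<rho>)^2 * (1 + X)^2)) * \<kappa> * (\<kappa> + 1)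
        = ((1 - \<rho>) * (1 - X) * (\<kappa> + 1)) * \<kappa> / (2 * (1 - X * \<rho>) * P)" unfolding P_def by (simp add: field_simps)
    also have "\<dots> = (1 + \<beta>) * \<kappa> / ((1 - \<beta>) * P)" unfolding E2' using be P0 nz by (simp add: field_simps)
    also have "\<dots> = (1 + \<beta>) / ((1 - \<beta>) * (P / \<kappa>))" using k by (simp add: field_simps)
    finally show ?thesis unfolding mult.assoc[of "1 - \<beta>"] aLm by simp
  qed
  have mid: "\<alpha>^2 * ((m + L)/2 * (m + L - (m + L)/2)) = (1 + \<beta>)^2"
  proof -
    have "\<alpha>^2 * ((m + L)/2 * (m + L - (m + L)/2)) = (\<alpha> * (m + L))^2 / 4" by (simp add: power2_eq_square field_simps)
    then show ?thesis unfolding key by (simp add: power2_eq_square algebra_simps)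
  qed
  have b1: "1 + \<beta> \<noteq> 0" "1 - \<beta> \<noteq> 0" using nz be by auto
  show "(1 + \<beta>) / ((1 - \<beta>) * \<alpha>^2 * ((m + L)/2 * (m + L - (m + L)/2))) =
       (1 - \<rho>) * \<kappa> * ((1 - X) / (1 - X * \<rho>) / ((1 + \<rho>) * (1 + X * \<rho>) * (1 + X)))"
  proof -
    have "(1 + \<beta>) / ((1 - \<beta>) * \<alpha>^2 * ((m + L)/2 * (m + L - (m + L)/2))) = 1 / ((1 - \<beta>) * (1 + \<beta>))"
      unfolding mult.assoc[of "1 - \<beta>"] mid using b1 by (simp add: power2_eq_square)
    also have "\<dots> = (1 - \<rho>) * \<kappa> * ((1 - X) / (1 - X * \<rho>) / ((1 + \<rho>) * (1 + X * \<rho>) * (1 + X)))"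
    proof -
      have "(1 - \<rho>) * \<kappa> * ((1 - X) / (1 - X * \<rho>) / ((1 + \<rho>) * (1 + X * \<rho>) * (1 + X)))
          = (\<kappa> * (1 - \<rho>) * (1 - X)) / (((1 + \<rho>) * (1 + X)) * ((1 - X * \<rho>) * (1 + X * \<rho>)))"
        using nz by (simp add: field_simps)
      also have "\<dots> = ((1 + \<rho>) * (1 + X)) / (((1 + \<rho>) * (1 + X)) * ((1 - X * \<rho>) * (1 + X * \<rho>)))"
        unfolding E1[symmetric] ..
      also have "\<dots> = 1 / ((1 - X * \<rho>) * (1 + X * \<rho>))" using nz by simp
      finally show ?thesis using be by (simp add: mult.commute)
    qed
    finally show ?thesis .
  qed
  show "\<alpha>^2 * ((1 + \<beta>) / ((1 - \<beta>) * \<alpha>^2 * (L * (m + L - L)))) =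
       (1 - \<rho>) * ((1 - X) / (1 - X * \<rho>) / (2 * L^2)) * \<kappa> * (\<kappa> + 1)"
  proof -
    have "\<alpha>^2 * ((1 + \<beta>) / ((1 - \<beta>) * \<alpha>^2 * (L * (m + L - L)))) = (1 + \<beta>) / ((1 - \<beta>) * (L * m))"
      using a0 b1 L0 mpos by (simp add: field_simps)
    also have "\<dots> = ((1 - \<rho>) * (1 - X) * (\<kappa> + 1)) / (2 * (1 - \<beta>) * (L * m))" unfolding E2' using b1 L0 mpos by (simp add: field_simps)
    also have "\<dots> = (1 - \<rho>) * ((1 - X) / (1 - X * \<rho>) / (2 * L^2)) * \<kappa> * (\<kappa> + 1)"
      using nz mpos k be Lk by (simp add: field_simps power2_eq_square)
    finally show ?thesis .
  qed
  show "\<alpha>^2 * ((1 + \<beta>) / ((1 - \<beta>) * \<alpha>^2 * ((m + L)/2 * (m + L - (m + L)/2)))) =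
       (1 - \<rho>) * \<kappa> * ((1 - X) / (1 - X * \<rho>) * ((1 + X) / (1 + X * \<rho>)) * (1 + \<rho>) / L^2)"
  proof -
    have e1: "\<alpha>^2 * ((1 + \<beta>) / ((1 - \<beta>) * \<alpha>^2 * ((m + L)/2 * (m + L - (m + L)/2)))) = \<alpha>^2 / ((1 - \<beta>) * (1 + \<beta>))"
      unfolding mult.assoc[of "1 - \<beta>"] mid using b1 by (simp add: power2_eq_square)
    have e2: "\<alpha>^2 = (1 + \<rho>) * (1 + X) * (\<kappa> * (1 - \<rho>) * (1 - X)) / L^2" unfolding al E1[symmetric]
      by (simp add: power2_eq_square)
    show ?thesis unfolding e1 by (subst e2) (use nz be L0 in \<open>simp add: field_simps\<close>)
  qed
qed

lemma qb:
  fixes \<rho> d :: real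
  assumes r: "0 < \<rho>" "\<rho> < 1" and d: "-1 \<le> d" "d \<le> 1"
  shows "1 - d * \<rho>^2 > 0" "1 + d * \<rho>^2 > 0" "1 + d * \<rho> > 0" "1 - d * \<rho> > 0"
    "1/2 \<le> (1 - d * \<rho>) / (1 - d * \<rho>^2)" "(1 - d * \<rho>) / (1 - d * \<rho>^2) \<le> 2"
    "0 \<le> d \<Longrightarrow> (1 - d * \<rho>) / (1 - d * \<rho>^2) \<le> 1"
proof -
  have ad: "\<bar>d\<bar> \<le> 1" using d by simp
  have r2: "\<rho>^2 < 1" "0 < \<rho>^2" using r by (simp_all add: power_less_one_iff)
  have "\<bar>d * \<rho>^2\<bar> = \<bar>d\<bar> * \<rho>^2" by (simp add: abs_mult)
  moreover have "\<bar>d\<bar> * \<rho>^2 \<le> 1 * \<rho>^2" by (rule mult_right_mono) (use ad in auto)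
  ultimately have "\<bar>d * \<rho>^2\<bar> < 1" using r2 by linarith
  then show p1: "1 - d * \<rho>^2 > 0" "1 + d * \<rho>^2 > 0" by (auto simp: abs_less_iff)
  have "\<bar>d * \<rho>\<bar> = \<bar>d\<bar> * \<rho>" using r by (simp add: abs_mult)
  moreover have "\<bar>d\<bar> * \<rho> \<le> 1 * \<rho>" by (rule mult_right_mono) (use ad r in auto)
  ultimately have "\<bar>d * \<rho>\<bar> < 1" using r by linarith
  then show p2: "1 + d * \<rho> > 0" "1 - d * \<rho> > 0" by (auto simp: abs_less_iff)
  have "1 - 2 * d * \<rho> + d * \<rho>^2 \<ge> 0"
  proof (cases "d \<ge> 0")
    case True
    have "1 - 2 * d * \<rho> + d * \<rho>^2 = (1 - d) + d * (1 - \<rho>)^2" by (simp add: power2_eq_square algebra_simps)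
    also have "\<dots> \<ge> 0" using True d by simp
    finally show ?thesis .
  next
    case False
    have "1 - 2 * d * \<rho> + d * \<rho>^2 = 1 + (-d) * (\<rho> * (2 - \<rho>))" by (simp add: power2_eq_square algebra_simps)
    also have "\<dots> \<ge> 0" using False r by (intro add_nonneg_nonneg mult_nonneg_nonneg) auto
    finally show ?thesis .
  qed
  then show "1/2 \<le> (1 - d * \<rho>) / (1 - d * \<rho>^2)" using p1 by (simp add: le_divide_eq)
  have "\<bar>d * (\<rho> * (1 - 2 * \<rho>))\<bar> \<le> 1"
  proof -
    have a1: "\<bar>1 - 2 * \<rho>\<bar> \<le> 1" using r by (simp add: abs_le_iff)
    have "\<bar>\<rho> * (1 - 2 * \<rho>)\<bar> \<le> 1" unfolding abs_mult using r a1 by (intro mult_le_one) auto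
    then show ?thesis unfolding abs_mult[of d] using ad by (intro mult_le_one) auto
  qed
  then have "1 + d * \<rho> - 2 * d * \<rho>^2 \<ge> 0" by (simp add: abs_le_iff power2_eq_square algebra_simps)
  then show "(1 - d * \<rho>) / (1 - d * \<rho>^2) \<le> 2" using p1 by (simp add: divide_le_eq)
  assume "0 \<le> d"
  then have "d * \<rho>^2 \<le> d * \<rho>" using r by (intro mult_left_mono) (simp_all add: power2_eq_square)
  then show "(1 - d * \<rho>) / (1 - d * \<rho>^2) \<le> 1" using p1 by (simp add: divide_le_eq)
qed

lemma pbounds:
  fixes \<rho> c L p1 p2 p3 p4 :: real and qc :: "real \<Rightarrow> real"
  assumes r: "0 < \<rho>" "\<rho> < 1" and c: "-1 \<le> c" "c \<le> 1" and L: "L > 0"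
    and qc_def: "\<And>d. qc d = (1 - d * \<rho>) / (1 - d * \<rho>^2)"
    and p1_def: "p1 = qc c / (2 * (1 + \<rho>)^2 * (1 + c * \<rho>)^2)"
    and p2_def: "p2 = qc c / ((1 + \<rho>) * (1 + c * \<rho>^2) * (1 + c * \<rho>))"
    and p3_def: "p3 = qc c / (2 * L^2)"
    and p4_def: "p4 = qc c * qc (- c) * (1 + \<rho>) / L^2"
  shows "(0 \<le> c \<longrightarrow> (1/64 \<le> p1 \<and> p1 \<le> 1/2 \<and> 1/16 \<le> p2 \<and> p2 \<le> 1))
    \<and> (1 / (4 * L^2) \<le> p3 \<and> p3 \<le> 1 / L^2 \<and> 1 / (4 * L^2) \<le> p4 \<and> p4 \<le> 4 / L^2)"
proof -
  note q = qb[OF r c]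
  have c': "-1 \<le> -c" "-c \<le> 1" using c by auto
  note q' = qb[OF r c']
  have q1: "1/2 \<le> qc c" "qc c \<le> 2" using q(5,6) by (simp_all add: qc_def)
  have q2: "1/2 \<le> qc (-c)" using q'(5) by (simp add: qc_def)
  have L2: "L^2 > 0" using L by simp
  have part1: "0 \<le> c \<longrightarrow> (1/64 \<le> p1 \<and> p1 \<le> 1/2 \<and> 1/16 \<le> p2 \<and> p2 \<le> 1)"
  proof
    assume c0: "0 \<le> c"
    have q3: "qc c \<le> 1" using q(7)[OF c0] by (simp add: qc_def)
    have cr: "0 \<le> c * \<rho>" "c * \<rho> \<le> 1" using c0 c r by (auto intro: mult_le_one)
    have cr2: "0 \<le> c * \<rho>^2" "c * \<rho>^2 \<le> 1" using c0 c r by (auto intro: mult_le_one simp: power_le_one)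
    have a1u: "(1 + \<rho>)^2 \<le> 2^2" by (rule power_mono) (use r in auto)
    have a2u: "(1 + c * \<rho>)^2 \<le> 2^2" by (rule power_mono) (use cr in auto)
    have a1: "1 \<le> (1 + \<rho>)^2" "(1 + \<rho>)^2 \<le> 4" using r a1u by (auto intro!: one_le_power)
    have a2: "1 \<le> (1 + c * \<rho>)^2" "(1 + c * \<rho>)^2 \<le> 4" using cr a2u by (auto intro!: one_le_power)
    define D where "D = 2 * (1 + \<rho>)^2 * (1 + c * \<rho>)^2"
    have D: "2 \<le> D" "D \<le> 32"
    proof -
      have "1 * 1 \<le> (1 + \<rho>)^2 * (1 + c * \<rho>)^2" using a1 a2 by (intro mult_mono) auto
      then show "2 \<le> D" by (simp add: D_def)
      have "(1 + \<rho>)^2 * (1 + c * \<rho>)^2 \<le> 4 * 4" using a1 a2 by (intro mult_mono) auto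
      then show "D \<le> 32" by (simp add: D_def)
    qed
    define E where "E = (1 + \<rho>) * (1 + c * \<rho>^2) * (1 + c * \<rho>)"
    have E: "1 \<le> E" "E \<le> 8"
    proof -
      have "1 * 1 * 1 \<le> E" unfolding E_def using r cr cr2 by (intro mult_mono) auto
      then show "1 \<le> E" by simp
      have "E \<le> 2 * 2 * 2" unfolding E_def using r cr cr2 by (intro mult_mono) auto
      then show "E \<le> 8" by simp
    qed
    have "1/64 \<le> p1" unfolding p1_def D_def[symmetric] using frac_le[of "qc c" "1/2" D 32] q1 D by simp
    moreover have "p1 \<le> 1/2" unfolding p1_def D_def[symmetric] using frac_le[of 1 "qc c" 2 D] q1 q3 D by simp
    moreover have "1/16 \<le> p2" unfolding p2_def E_def[symmetric] using frac_le[of "qc c" "1/2" E 8] q1 E by simp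
    moreover have "p2 \<le> 1" unfolding p2_def E_def[symmetric] using frac_le[of 1 "qc c" 1 E] q1 q3 E by simp
    ultimately show "1/64 \<le> p1 \<and> p1 \<le> 1/2 \<and> 1/16 \<le> p2 \<and> p2 \<le> 1" by blast
  qed
  have "1 / (4 * L^2) \<le> p3" unfolding p3_def using q1 L2 by (simp add: field_simps)
  moreover have "p3 \<le> 1 / L^2" unfolding p3_def using q1 L2 by (simp add: field_simps)
  moreover have "1 / (4 * L^2) \<le> p4 \<and> p4 \<le> 4 / L^2"
  proof -
    define R where "R = qc c * qc (- c)"
    have R1: "1/4 \<le> R" unfolding R_def using q1 q2 mult_mono[of "1/2" "qc c" "1/2" "qc (-c)"] by simp
    have R2: "R \<le> 1"
    proof -
      have "R = ((1 - c * \<rho>) * (1 + c * \<rho>)) / ((1 - c * \<rho>^2) * (1 + c * \<rho>^2))"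
        unfolding R_def qc_def by simp
      also have "\<dots> \<le> 1"
      proof -
        have "(1 - c * \<rho>) * (1 + c * \<rho>) = 1 - c^2 * \<rho>^2" by (simp add: power2_eq_square algebra_simps)
        moreover have "(1 - c * \<rho>^2) * (1 + c * \<rho>^2) = 1 - c^2 * \<rho>^2 * \<rho>^2" by (simp add: power2_eq_square algebra_simps)
        moreover have "c^2 * \<rho>^2 * \<rho>^2 \<le> c^2 * \<rho>^2 * 1" using r by (intro mult_left_mono) (auto simp: power_le_one)
        moreover have "(1 - c * \<rho>^2) * (1 + c * \<rho>^2) > 0" using q(1,2) by simp
        ultimately show ?thesis by (simp add: divide_le_eq)
      qed
      finally show ?thesis .
    qed
    have p4: "p4 = R * (1 + \<rho>) / L^2" unfolding p4_def R_def by simp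
    have "R * 1 \<le> R * (1 + \<rho>)" using R1 r by (intro mult_left_mono) auto
    then have l: "1/4 \<le> R * (1 + \<rho>)" using R1 by linarith
    have "R * (1 + \<rho>) \<le> 1 * 2" using R1 R2 r by (intro mult_mono) auto
    then have u: "R * (1 + \<rho>) \<le> 4" by linarith
    have "(1/4) / L^2 \<le> R * (1 + \<rho>) / L^2" by (rule divide_right_mono[OF l]) (use L2 in simp)
    moreover have "R * (1 + \<rho>) / L^2 \<le> 4 / L^2" by (rule divide_right_mono[OF u]) (use L2 in simp)
    ultimately show ?thesis unfolding p4 by simp
  qed
  ultimately show ?thesis using part1 by blast
qed

theorem proposition2:
  fixes m L \<rho> :: real
    and M :: "'w measure" and w :: "nat \<Rightarrow> 'w \<Rightarrow> real^'n" and x0 x1 :: "real^'n"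
    and \<kappa> Ts c \<alpha> \<beta> \<gamma> p1 p2 p3 p4 n :: real and qc :: "real \<Rightarrow> real"
  assumes n2: "CARD('n) \<ge> 2"
    and mpos: "0 < m" and mL: "m \<le> L"
    and rho: "0 < \<rho>" "\<rho> < 1"
    and rho_cond: "1 / (1 - \<rho>) \<ge> (sqrt \<kappa> + 1) / 2"
    and prob: "prob_space M" and wn: "white_noise M w"
    and kappa_def: "\<kappa> = L / m"
    and Ts_def: "Ts = 1 / (1 - \<rho>)"
    and c_def: "c = (\<kappa> - (1 + \<rho>) / (1 - \<rho>)) / (\<rho> * (\<kappa> + (1 + \<rho>) / (1 - \<rho>)))"
    and alpha_def: "\<alpha> = (1 + \<rho>) * (1 + c * \<rho>) / L"
    and beta_def: "\<beta> = c * \<rho>^2"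
    and gamma_def: "\<gamma> = 0"
    and qc_def: "\<And>d. qc d = (1 - d * \<rho>) / (1 - d * \<rho>^2)"
    and p1_def: "p1 = qc c / (2 * (1 + \<rho>)^2 * (1 + c * \<rho>)^2)"
    and p2_def: "p2 = qc c / ((1 + \<rho>) * (1 + c * \<rho>^2) * (1 + c * \<rho>))"
    and p3_def: "p3 = qc c / (2 * L^2)"
    and p4_def: "p4 = qc c * qc (- c) * (1 + \<rho>) / L^2"
    and n_def: "n = real CARD('n)"
  shows "(-1 \<le> c \<and> c \<le> 1)
    \<and> (\<forall>\<sigma>w>0. noise_amp_exists M w \<alpha> \<beta> \<gamma> \<sigma>w m L x0 x1
           \<and> (\<exists>Jmax. is_max_of (noise_amp_set M w \<alpha> \<beta> \<gamma> \<sigma>w m L x0 x1) Jmax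
                   \<and> Jmax * Ts = \<sigma>w^2 * p1 * n * \<kappa> * (\<kappa> + 1))
           \<and> (\<exists>Jmin. is_min_of (noise_amp_set M w \<alpha> \<beta> \<gamma> \<sigma>w m L x0 x1) Jmin
                   \<and> Jmin * Ts = \<sigma>w^2 * \<kappa> * (2 * p1 * (\<kappa> + 1) + (n - 2) * p2)))
    \<and> (\<forall>\<sigma>>0. noise_amp_exists M w \<alpha> \<beta> \<gamma> (\<alpha> * \<sigma>) m L x0 x1
           \<and> (\<exists>Jmax. is_max_of (noise_amp_set M w \<alpha> \<beta> \<gamma> (\<alpha> * \<sigma>) m L x0 x1) Jmax
                   \<and> Jmax * Ts = \<sigma>^2 * p3 * n * \<kappa> * (\<kappa> + 1))
           \<and> (\<exists>Jmin. is_min_of (noise_amp_set M w \<alpha> \<beta> \<gamma> (\<alpha> * \<sigma>) m L x0 x1) Jmin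
                   \<and> Jmin * Ts = \<sigma>^2 * \<kappa> * (2 * p3 * (\<kappa> + 1) + (n - 2) * p4)))
    \<and> (0 \<le> c \<longrightarrow> (1/64 \<le> p1 \<and> p1 \<le> 1/2 \<and> 1/16 \<le> p2 \<and> p2 \<le> 1))
    \<and> (1 / (4 * L^2) \<le> p3 \<and> p3 \<le> 1 / L^2 \<and> 1 / (4 * L^2) \<le> p4 \<and> p4 \<le> 4 / L^2)"
proof -
  interpret W: wn_space M w using prob wn by (simp add: wn_space_def wn_space_axioms_def)
  have k1: "1 \<le> \<kappa>" and cr: "c * \<rho> = (\<kappa> - (1 + \<rho>) / (1 - \<rho>)) / (\<kappa> + (1 + \<rho>) / (1 - \<rho>))"
    and cb: "-1 \<le> c" "c \<le> 1"
    using alg_basic[OF mpos mL rho(1) rho(2) rho_cond kappa_def c_def] by auto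
  define X where "X = c * \<rho>"
  note E = E12[OF rho(1) rho(2) k1 cr[folded X_def]]
  note q = qb[OF rho(1) rho(2) cb]
  have Lk: "L = \<kappa> * m" using kappa_def mpos by simp
  have L0: "L > 0" using mpos mL by simp
  have Xb: "\<bar>X\<bar> < 1" using q(3,4) unfolding X_def by (simp add: abs_less_iff)
  have XR: "\<bar>X * \<rho>\<bar> < 1" using q(1,2) unfolding X_def by (simp add: abs_less_iff power2_eq_square mult.assoc)
  have al: "\<alpha> = (1 + \<rho>) * (1 + X) / L" using alpha_def X_def by simp
  have be: "\<beta> = X * \<rho>" using beta_def X_def by (simp add: power2_eq_square mult.assoc)
  note I = idents[OF rho(1) rho(2) mpos Lk k1 Xb XR E(1) E(2) al be]
  have bb: "\<bar>\<beta>\<bar> < 1" using XR be by simp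
  have apos: "\<alpha> > 0" unfolding al using Xb rho L0 by (simp add: abs_less_iff)
  have qcc: "qc c = (1 - X) / (1 - X * \<rho>)" using qc_def[of c] X_def by (simp add: power2_eq_square mult.assoc)
  have qcm: "qc (-c) = (1 + X) / (1 + X * \<rho>)" using qc_def[of "-c"] X_def by (simp add: power2_eq_square mult.assoc)
  have P1: "p1 = (1 - X) / (1 - X * \<rho>) / (2 * (1 + \<rho>)^2 * (1 + X)^2)" using p1_def qcc X_def by simp
  have P2: "p2 = (1 - X) / (1 - X * \<rho>) / ((1 + \<rho>) * (1 + X * \<rho>) * (1 + X))"
    using p2_def qcc X_def by (simp add: power2_eq_square mult_ac)
  have P3: "p3 = (1 - X) / (1 - X * \<rho>) / (2 * L^2)" using p3_def qcc by simp
  have P4: "p4 = (1 - X) / (1 - X * \<rho>) * ((1 + X) / (1 + X * \<rho>)) * (1 + \<rho>) / L^2" using p4_def qcc qcm by simp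
  let ?pf = "pfn \<alpha> \<beta> m L"
  have fL: "?pf L = (1 - \<rho>) * p1 * \<kappa> * (\<kappa> + 1)" unfolding pfn_def P1 using I(2) by simp
  have fmid: "?pf ((m + L)/2) = (1 - \<rho>) * \<kappa> * p2" unfolding pfn_def P2 using I(3) by simp
  have gL: "\<alpha>^2 * ?pf L = (1 - \<rho>) * p3 * \<kappa> * (\<kappa> + 1)" unfolding pfn_def P3 using I(4) by simp
  have gmid: "\<alpha>^2 * ?pf ((m + L)/2) = (1 - \<rho>) * \<kappa> * p4" unfolding pfn_def P4 using I(5) by simp
  have fm: "?pf m = ?pf L" by (rule pf_bounds(3)[OF mpos order_refl mL bb apos])
  have r1: "1 - \<rho> \<noteq> 0" using rho by simp
  have n2': "CARD('n) \<ge> 2" using n2 .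
  note MN = W.main_noise[OF mpos mL n2' bb apos I(1)]
  have part1: "\<forall>\<sigma>w>0. noise_amp_exists M w \<alpha> \<beta> \<gamma> \<sigma>w m L x0 x1
           \<and> (\<exists>Jmax. is_max_of (noise_amp_set M w \<alpha> \<beta> \<gamma> \<sigma>w m L x0 x1) Jmax
                   \<and> Jmax * Ts = \<sigma>w^2 * p1 * n * \<kappa> * (\<kappa> + 1))
           \<and> (\<exists>Jmin. is_min_of (noise_amp_set M w \<alpha> \<beta> \<gamma> \<sigma>w m L x0 x1) Jmin
                   \<and> Jmin * Ts = \<sigma>w^2 * \<kappa> * (2 * p1 * (\<kappa> + 1) + (n - 2) * p2))"
  proof (intro allI impI)
    fix \<sigma>w :: real assume "\<sigma>w > 0"
    note R = MN[of \<sigma>w x0 x1]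
    have e1: "\<sigma>w^2 * (real CARD('n) * ?pf L) * Ts = \<sigma>w^2 * p1 * n * \<kappa> * (\<kappa> + 1)"
      unfolding fL Ts_def n_def using r1 by (simp add: field_simps)
    have e2: "\<sigma>w^2 * (?pf m + ?pf L + (real CARD('n) - 2) * ?pf ((m+L)/2)) * Ts = \<sigma>w^2 * \<kappa> * (2 * p1 * (\<kappa> + 1) + (n - 2) * p2)"
      unfolding fm fL fmid Ts_def n_def using r1 by (simp add: field_simps)
    show "noise_amp_exists M w \<alpha> \<beta> \<gamma> \<sigma>w m L x0 x1
           \<and> (\<exists>Jmax. is_max_of (noise_amp_set M w \<alpha> \<beta> \<gamma> \<sigma>w m L x0 x1) Jmax
                   \<and> Jmax * Ts = \<sigma>w^2 * p1 * n * \<kappa> * (\<kappa> + 1))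
           \<and> (\<exists>Jmin. is_min_of (noise_amp_set M w \<alpha> \<beta> \<gamma> \<sigma>w m L x0 x1) Jmin
                   \<and> Jmin * Ts = \<sigma>w^2 * \<kappa> * (2 * p1 * (\<kappa> + 1) + (n - 2) * p2))"
      unfolding gamma_def using R e1 e2 by blast
  qed
  have part2: "\<forall>\<sigma>>0. noise_amp_exists M w \<alpha> \<beta> \<gamma> (\<alpha> * \<sigma>) m L x0 x1
           \<and> (\<exists>Jmax. is_max_of (noise_amp_set M w \<alpha> \<beta> \<gamma> (\<alpha> * \<sigma>) m L x0 x1) Jmax
                   \<and> Jmax * Ts = \<sigma>^2 * p3 * n * \<kappa> * (\<kappa> + 1))
           \<and> (\<exists>Jmin. is_min_of (noise_amp_set M w \<alpha> \<beta> \<gamma> (\<alpha> * \<sigma>) m L x0 x1) Jmin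
                   \<and> Jmin * Ts = \<sigma>^2 * \<kappa> * (2 * p3 * (\<kappa> + 1) + (n - 2) * p4))"
  proof (intro allI impI)
    fix \<sigma> :: real assume "\<sigma> > 0"
    note R = MN[of "\<alpha> * \<sigma>" x0 x1]
    have e1: "(\<alpha> * \<sigma>)^2 * (real CARD('n) * ?pf L) * Ts = \<sigma>^2 * p3 * n * \<kappa> * (\<kappa> + 1)"
    proof -
      have "(\<alpha> * \<sigma>)^2 * (real CARD('n) * ?pf L) * Ts = \<sigma>^2 * real CARD('n) * (\<alpha>^2 * ?pf L) * Ts"
        by (simp add: power_mult_distrib mult_ac)
      then show ?thesis unfolding gL Ts_def n_def using r1 by (simp add: field_simps)
    qed
    have e2: "(\<alpha> * \<sigma>)^2 * (?pf m + ?pf L + (real CARD('n) - 2) * ?pf ((m+L)/2)) * Ts = \<sigma>^2 * \<kappa> * (2 * p3 * (\<kappa> + 1) + (n - 2) * p4)"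
    proof -
      have "(\<alpha> * \<sigma>)^2 * (?pf m + ?pf L + (real CARD('n) - 2) * ?pf ((m+L)/2)) * Ts
          = \<sigma>^2 * (2 * (\<alpha>^2 * ?pf L) + (real CARD('n) - 2) * (\<alpha>^2 * ?pf ((m+L)/2))) * Ts"
        unfolding fm by (simp add: power_mult_distrib algebra_simps)
      then show ?thesis unfolding gL gmid Ts_def n_def using r1 by (simp add: field_simps)
    qed
    show "noise_amp_exists M w \<alpha> \<beta> \<gamma> (\<alpha> * \<sigma>) m L x0 x1
           \<and> (\<exists>Jmax. is_max_of (noise_amp_set M w \<alpha> \<beta> \<gamma> (\<alpha> * \<sigma>) m L x0 x1) Jmax
                   \<and> Jmax * Ts = \<sigma>^2 * p3 * n * \<kappa> * (\<kappa> + 1))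
           \<and> (\<exists>Jmin. is_min_of (noise_amp_set M w \<alpha> \<beta> \<gamma> (\<alpha> * \<sigma>) m L x0 x1) Jmin
                   \<and> Jmin * Ts = \<sigma>^2 * \<kappa> * (2 * p3 * (\<kappa> + 1) + (n - 2) * p4))"
      unfolding gamma_def using R e1 e2 by blast
  qed
  have part3: "(0 \<le> c \<longrightarrow> (1/64 \<le> p1 \<and> p1 \<le> 1/2 \<and> 1/16 \<le> p2 \<and> p2 \<le> 1))
    \<and> (1 / (4 * L^2) \<le> p3 \<and> p3 \<le> 1 / L^2 \<and> 1 / (4 * L^2) \<le> p4 \<and> p4 \<le> 4 / L^2)"
    by (rule pbounds[OF rho(1) rho(2) cb L0 qc_def p1_def p2_def p3_def p4_def])
  show ?thesis using cb part1 part2 part3 by blast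
qed

end
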